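(* Assume (H1) and (H2). The function $\widehat\varphi:(0,\infty)\to(0,\infty)$ is strictly decreasing from $+\infty$ to $0$ and $\varphi:(0,\infty)\to(0,\infty)$ is strictly increasing from $0$ to $+\infty$; let $\alpha_{01}=\widehat\varphi^{-1}(1)$ and $\alpha_{02}=\varphi^{-1}(1)$. If $$Q_0<\frac{2\pi\lambda_0\theta_m}{\bar F_1(\alpha_{01})},$$ then $\alpha_{01}<\alpha_{02}$, and for every $\alpha_0\in(\alpha_{01},\alpha_{02})$ the operator $\Psi^{\alpha_0}:\mathcal K\to\mathcal K$, $\Psi^{\alpha_0}(f_1,f_2)=(U^{\alpha_0}(f_1),W^{\alpha_0}(f_2))$, is a contraction with respect to $\|(f_1,f_2)\|=\max\{\|f_1\|,\|f_2\|\}$ and has a unique fixed point in $\mathcal K=C[0,\alpha_0]\times\mathcal M$. Equivalently, the system $f_1=U^{\alpha_0}(f_1)$, $f_2=W^{\alpha_0}(f_2)$ has a unique solution $(f_1,f_2)\in C[0,\alpha_0]\times\mathcal M$.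
   Context: Fix constants $a>0$, $Q_0>0$, $\lambda_0>0$, $\theta_m>0$ and put $D^*=\frac{Q_0}{4\pi\lambda_0\theta_m}$. For $\alpha_0>0$: $C[0,\alpha_0]$ is the Banach space of real continuous functions on $[0,\alpha_0]$ with norm $\|f\|=\max_{[0,\alpha_0]}|f|$; $C_b[\alpha_0,\infty)$ is the Banach space of bounded continuous real functions on $[\alpha_0,\infty)$ with norm $\|f\|=\sup_{[\alpha_0,\infty)}|f|$; $\mathcal M=\{f\in C_b[\alpha_0,\infty): f(\alpha_0)=0,\ \lim_{\xi\to\infty}f(\xi)=-1\}$. We are given maps $L^*,N^*$ assigning to each $f_1\in C[0,\alpha_0]$ positive continuous functions $L^*(f_1),N^*(f_1)$ on $(0,\alpha_0]$, and to each $f_2\in\mathcal M$ positive continuous functions $L^*(f_2),N^*(f_2)$ on $[\alpha_0,\infty)$. Define, for $0\le\eta\le\alpha_0$ and $\xi\ge\alpha_0$ ($\xi=\infty$ allowed as an improper integral): $E_1(0,\eta,f_1)=\exp\big(-\alpha_0 a\int_0^{\eta}\frac{N^*(f_1)(s)}{L^*(f_1)(s)}ds\big)$, $F_1(0,\eta,f_1)=\int_0^{\eta}\frac{E_1(0,s,f_1)}{s\,L^*(f_1)(s)}ds$, $E_2(\alpha_0,\xi,f_2)=\exp\big(-\alpha_0 a\int_{\alpha_0}^{\xi}\frac{N^*(f_2)(s)}{L^*(f_2)(s)}ds\big)$, $F_2(\alpha_0,\xi,f_2)=\int_{\alpha_0}^{\xi}\frac{E_2(\alpha_0,s,f_2)}{s\,L^*(f_2)(s)}ds$;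 and operators $U^{\alpha_0}(f_1)(\eta)=D^*[F_1(0,\alpha_0,f_1)-F_1(0,\eta,f_1)]$, $W^{\alpha_0}(f_2)(\xi)=-F_2(\alpha_0,\xi,f_2)/F_2(\alpha_0,\infty,f_2)$. Hypothesis (H1): there are positive constants $\mu,\nu,\beta,\sigma,L_{1m},L_{1M},N_{1m},N_{1M},L_{2m},L_{2M},N_{2m},N_{2M}$ with $\mu>\max(1,\nu)$ and $\beta>\sigma+2$ such that for all $\alpha_0>0$, all $f_1\in C[0,\alpha_0]$ and all $0<\eta\le\alpha_0$: $L_{1m}\eta^{-\mu}\le L^*(f_1)(\eta)\le L_{1M}\eta^{-\mu}$ and $N_{1m}\eta^{-\nu}\le N^*(f_1)(\eta)\le N_{1M}\eta^{-\nu}$; and for all $f_2\in\mathcal M$ and $\xi\ge\alpha_0$: $L_{2m}\xi^{\beta}\le L^*(f_2)(\xi)\le L_{2M}\xi^{\beta}$ and $N_{2m}\xi^{\sigma}\le N^*(f_2)(\xi)\le N_{2M}\xi^{\sigma}$. Hypothesis (H2): there are constants $\bar L_1,\bar N_1,\bar L_2,\bar N_2\ge0$ such that for all $\alpha_0>0$: $\sup_{0<s\le\alpha_0}|L^*(f_1)(s)-L^*(f_1^* )(s)|\le\bar L_1\|f_1-f_1^*\|$ and $\sup_{0<s\le\alpha_0}|N^*(f_1)(s)-N^*(f_1^* )(s)|\le\bar N_1\|f_1-f_1^*\|$ for all $f_1,f_1^*\in C[0,\alpha_0]$, and $\sup_{s\ge\alpha_0}|L^*(f_2)(s)-L^*(f_2^*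 )(s)|\le\bar L_2\|f_2-f_2^*\|$, $\sup_{s\ge\alpha_0}|N^*(f_2)(s)-N^*(f_2^* )(s)|\le\bar N_2\|f_2-f_2^*\|$ for all $f_2,f_2^*\in\mathcal M$. For $z>0$: $\bar F_1(z)=\frac{za}{L_{1m}^2}\Big(\frac{\bar N_1 z^{2\mu+1}}{(\mu+1)(2\mu+1)}+\frac{\bar L_1N_{1M}}{L_{1m}}\frac{z^{3\mu-\nu+1}}{(2\mu-\nu+1)(3\mu-\nu+1)}\Big)+\frac{\bar L_1}{L_{1m}^2}\frac{z^{2\mu}}{2\mu}$, $\bar F_2(z)=\frac{za}{\beta L_{2m}^2}\Big[\frac{\bar N_2}{\beta-1}\frac{1}{z^{\beta-1}}+\frac{\bar L_2N_{2M}}{L_{2m}(2\beta-\sigma-1)}\frac{1}{z^{2\beta-\sigma-1}}\Big]\frac{1}{z^{\beta}}+\frac{\bar L_2}{2\beta L_{2m}^2}\frac{1}{z^{2\beta}}$, $\varphi(z)=2D^*\bar F_1(z)$, $\widehat\varphi(z)=2L_{2M}\beta z^{\beta}\bar F_2(z)\exp\Big(\frac{aN_{2M}}{L_{2m}(\beta-\sigma-1)}\frac{1}{z^{\beta-\sigma-2}}\Big)$. *)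

theory Defs
  imports "HOL-Analysis.Analysis"
begin

definition supn :: "real set \<Rightarrow> (real \<Rightarrow> real) \<Rightarrow> real" where
  "supn S f = (SUP x\<in>S. \<bar>f x\<bar>)"

text \<open>Membership in C[0,alpha0] and in the set M (functions are represented as
  real \<Rightarrow> real; only their values on the relevant domain matter).\<close>
definition inC :: "real \<Rightarrow> (real \<Rightarrow> real) \<Rightarrow> bool" where
  "inC \<alpha>0 f \<longleftrightarrow> continuous_on {0..\<alpha>0} f"

definition inM :: "real \<Rightarrow> (real \<Rightarrow> real) \<Rightarrow> bool" where
  "inM \<alpha>0 f \<longleftrightarrow> continuous_on {\<alpha>0..} f \<and> bounded (f ` {\<alpha>0..}) \<and> f \<alpha>0 = 0
      \<and> (f \<longlongrightarrow> -1) at_top"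

definition Dstar :: "real \<Rightarrow> real \<Rightarrow> real \<Rightarrow> real" where
  "Dstar Q0 lam0 \<theta>m = Q0 / (4 * pi * lam0 * \<theta>m)"

text \<open>E_1, F_1, E_2, F_2; here L and N stand for L^*(f) and N^*(f).\<close>
definition E1 :: "real \<Rightarrow> real \<Rightarrow> (real \<Rightarrow> real) \<Rightarrow> (real \<Rightarrow> real) \<Rightarrow> real \<Rightarrow> real" where
  "E1 a \<alpha>0 L N \<eta> = exp (- (\<alpha>0 * a) * integral {0..\<eta>} (\<lambda>s. N s / L s))"

definition F1 :: "real \<Rightarrow> real \<Rightarrow> (real \<Rightarrow> real) \<Rightarrow> (real \<Rightarrow> real) \<Rightarrow> real \<Rightarrow> real" where
  "F1 a \<alpha>0 L N \<eta> = integral {0..\<eta>} (\<lambda>s. E1 a \<alpha>0 L N s / (s * L s))"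

definition E2 :: "real \<Rightarrow> real \<Rightarrow> (real \<Rightarrow> real) \<Rightarrow> (real \<Rightarrow> real) \<Rightarrow> real \<Rightarrow> real" where
  "E2 a \<alpha>0 L N \<xi> = exp (- (\<alpha>0 * a) * integral {\<alpha>0..\<xi>} (\<lambda>s. N s / L s))"

definition F2 :: "real \<Rightarrow> real \<Rightarrow> (real \<Rightarrow> real) \<Rightarrow> (real \<Rightarrow> real) \<Rightarrow> real \<Rightarrow> real" where
  "F2 a \<alpha>0 L N \<xi> = integral {\<alpha>0..\<xi>} (\<lambda>s. E2 a \<alpha>0 L N s / (s * L s))"

text \<open>F_2(alpha0, infinity, f): integral over [alpha0, oo) (nonnegative integrand,
  so this agrees with the improper integral).\<close>
definition F2inf :: "real \<Rightarrow> real \<Rightarrow> (real \<Rightarrow> real) \<Rightarrow> (real \<Rightarrow> real) \<Rightarrow> real" where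
  "F2inf a \<alpha>0 L N = integral {\<alpha>0..} (\<lambda>s. E2 a \<alpha>0 L N s / (s * L s))"

text \<open>The operators U^{alpha0} and W^{alpha0}. L1, N1 (resp. L2, N2) are the maps
  L^*, N^* on C[0,alpha0] (resp. on M), taking alpha0 and f as arguments.\<close>
definition Uop :: "real \<Rightarrow> real \<Rightarrow> real \<Rightarrow> (real \<Rightarrow> (real \<Rightarrow> real) \<Rightarrow> real \<Rightarrow> real)
    \<Rightarrow> (real \<Rightarrow> (real \<Rightarrow> real) \<Rightarrow> real \<Rightarrow> real) \<Rightarrow> (real \<Rightarrow> real) \<Rightarrow> real \<Rightarrow> real" where
  "Uop D a \<alpha>0 L1 N1 f \<eta> =
     D * (F1 a \<alpha>0 (L1 \<alpha>0 f) (N1 \<alpha>0 f) \<alpha>0 - F1 a \<alpha>0 (L1 \<alpha>0 f) (N1 \<alpha>0 f) \<eta>)"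

definition Wop :: "real \<Rightarrow> real \<Rightarrow> (real \<Rightarrow> (real \<Rightarrow> real) \<Rightarrow> real \<Rightarrow> real)
    \<Rightarrow> (real \<Rightarrow> (real \<Rightarrow> real) \<Rightarrow> real \<Rightarrow> real) \<Rightarrow> (real \<Rightarrow> real) \<Rightarrow> real \<Rightarrow> real" where
  "Wop a \<alpha>0 L2 N2 f \<xi> =
     - F2 a \<alpha>0 (L2 \<alpha>0 f) (N2 \<alpha>0 f) \<xi> / F2inf a \<alpha>0 (L2 \<alpha>0 f) (N2 \<alpha>0 f)"

definition Fbar1 :: "real \<Rightarrow> real \<Rightarrow> real \<Rightarrow> real \<Rightarrow> real \<Rightarrow> real \<Rightarrow> real \<Rightarrow> real \<Rightarrow> real" where
  "Fbar1 a \<mu> \<nu> L1m N1M L1b N1b z =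
     z * a / L1m^2 * (N1b * z powr (2*\<mu>+1) / ((\<mu>+1) * (2*\<mu>+1))
        + L1b * N1M / L1m * z powr (3*\<mu>-\<nu>+1) / ((2*\<mu>-\<nu>+1) * (3*\<mu>-\<nu>+1)))
     + L1b / L1m^2 * z powr (2*\<mu>) / (2*\<mu>)"

definition Fbar2 :: "real \<Rightarrow> real \<Rightarrow> real \<Rightarrow> real \<Rightarrow> real \<Rightarrow> real \<Rightarrow> real \<Rightarrow> real \<Rightarrow> real" where
  "Fbar2 a \<beta> \<sigma> L2m N2M L2b N2b z =
     z * a / (\<beta> * L2m^2) * (N2b / (\<beta>-1) * (1 / z powr (\<beta>-1))
        + L2b * N2M / (L2m * (2*\<beta>-\<sigma>-1)) * (1 / z powr (2*\<beta>-\<sigma>-1))) * (1 / z powr \<beta>)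
     + L2b / (2*\<beta>*L2m^2) * (1 / z powr (2*\<beta>))"

definition phi :: "real \<Rightarrow> real \<Rightarrow> real \<Rightarrow> real \<Rightarrow> real \<Rightarrow> real \<Rightarrow> real \<Rightarrow> real \<Rightarrow> real \<Rightarrow> real" where
  "phi D a \<mu> \<nu> L1m N1M L1b N1b z = 2 * D * Fbar1 a \<mu> \<nu> L1m N1M L1b N1b z"

definition phihat :: "real \<Rightarrow> real \<Rightarrow> real \<Rightarrow> real \<Rightarrow> real \<Rightarrow> real \<Rightarrow> real \<Rightarrow> real \<Rightarrow> real \<Rightarrow> real" where
  "phihat a \<beta> \<sigma> L2m L2M N2M L2b N2b z =
     2 * L2M * \<beta> * z powr \<beta> * Fbar2 a \<beta> \<sigma> L2m N2M L2b N2b z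
       * exp (a * N2M / (L2m * (\<beta>-\<sigma>-1)) * (1 / z powr (\<beta>-\<sigma>-2)))"

end

theory Submission
  imports Defs
begin

lemma int_bound:
  fixes g h :: "real \<Rightarrow> real"
  assumes "continuous_on S g" "S \<in> sets lebesgue" "h integrable_on S" "\<And>x. x\<in>S \<Longrightarrow> \<bar>g x\<bar> \<le> h x"
  shows "g integrable_on S"
  by (rule measurable_bounded_by_integrable_imp_integrable_real[OF continuous_imp_measurable_on_sets_lebesgue[OF assms(1,2)] assms(3,4,2)])

lemma oc_int_eq: fixes f :: "real \<Rightarrow> real" shows "integral {0..(e::real)} f = integral {0<..e} f"
proof (rule integral_spike_set)
  show "negligible {x \<in> {0..e} - {0<..e}. f x \<noteq> 0}" by (rule negligible_subset[of "{0}"]) auto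
  show "negligible {x \<in> {0<..e} - {0..e}. f x \<noteq> 0}" by (rule negligible_subset[of "{0}"]) auto
qed

lemma oc_integrable_eq: fixes f :: "real \<Rightarrow> real" shows "f integrable_on {0..(e::real)} \<longleftrightarrow> f integrable_on {0<..e}"
  by (rule integrable_spike_set_eq, rule negligible_subset[of "{0}"]) auto

lemma int_bound_oc:
  fixes g :: "real \<Rightarrow> real"
  assumes "continuous_on {0<..e} g" "\<And>x. x\<in>{0<..e} \<Longrightarrow> \<bar>g x\<bar> \<le> C"
  shows "g integrable_on {0..e}"
proof -
  have "(\<lambda>x. C) integrable_on {0..e}" by (rule integrable_const_ivl)
  hence "(\<lambda>x. C) integrable_on {0<..e}" using oc_integrable_eq by blast
  hence "g integrable_on {0<..e}" by (intro int_bound[OF assms(1) _ _ assms(2)]) auto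
  thus ?thesis using oc_integrable_eq by blast
qed

lemma exp_lip: fixes x y :: real assumes "x \<ge> 0" "y \<ge> 0" shows "\<bar>exp (-x) - exp (-y)\<bar> \<le> \<bar>x - y\<bar>"
proof -
  have key: "exp (-u) - exp (-v) \<le> v - u" if "0 \<le> u" "u \<le> v" for u v :: real
  proof -
    have "exp (-u) - exp (-v) = exp (-u) * (1 - exp (-(v-u)))" by (simp add: algebra_simps flip: exp_add)
    also have "\<dots> \<le> 1 * (1 - exp (-(v-u)))"
      using that by (intro mult_right_mono) auto
    also have "\<dots> \<le> v - u"
    proof -
      have h: "1 + (u - v) \<le> exp (u - v)" by (rule exp_ge_add_one_self)
      show ?thesis using h by (simp; linarith)
    qed
    finally show ?thesis .
  qed
  show ?thesis
  proof (cases "x \<le> y")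
    case True thus ?thesis using key[of x y] assms by auto
  next
    case False thus ?thesis using key[of y x] assms by auto
  qed
qed

locale Ufun =
  fixes a \<alpha>0 \<mu> \<nu> L1m N1M :: real and L N :: "real \<Rightarrow> real"
  assumes a: "a > 0" and al: "\<alpha>0 > 0" and mu: "\<mu> > 1" "\<nu> > 0" "\<nu> < \<mu>"
    and L1m: "L1m > 0" and N1M: "N1M > 0"
    and bL: "\<And>s. s \<in> {0<..\<alpha>0} \<Longrightarrow> L1m * s powr (-\<mu>) \<le> L s"
    and bN: "\<And>s. s \<in> {0<..\<alpha>0} \<Longrightarrow> 0 \<le> N s \<and> N s \<le> N1M * s powr (-\<nu>)"
    and cL: "continuous_on {0<..\<alpha>0} L" and cN: "continuous_on {0<..\<alpha>0} N"
begin

lemma Lpos: "s \<in> {0<..\<alpha>0} \<Longrightarrow> L s > 0"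
proof -
  assume s: "s \<in> {0<..\<alpha>0}"
  have "0 < L1m * s powr (-\<mu>)" using L1m s by simp
  thus ?thesis using bL[OF s] by linarith
qed

lemma invL: assumes "s \<in> {0<..\<alpha>0}" shows "1 / L s \<le> s powr \<mu> / L1m"
proof -
  have s: "s > 0" using assms by auto
  have "L1m / s powr \<mu> \<le> L s" using bL[OF assms] by (simp add: powr_minus divide_inverse)
  hence "L1m \<le> L s * s powr \<mu>" using s by (simp add: divide_le_eq)
  thus ?thesis using Lpos[OF assms] L1m s by (simp add: divide_le_eq le_divide_eq mult.commute)
qed

lemma NL_bound: assumes "s \<in> {0<..\<alpha>0}" shows "0 \<le> N s / L s" "N s / L s \<le> N1M / L1m * \<alpha>0 powr (\<mu> - \<nu>)"
proof -
  have s: "s > 0" "s \<le> \<alpha>0" using assms by auto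
  show "0 \<le> N s / L s" using bN[OF assms] Lpos[OF assms] by simp
  have "N s / L s = N s * (1 / L s)" by simp
  also have "\<dots> \<le> (N1M * s powr (-\<nu>)) * (s powr \<mu> / L1m)"
    using bN[OF assms] invL[OF assms] Lpos[OF assms] by (intro mult_mono) auto
  also have "\<dots> = N1M / L1m * s powr (\<mu> - \<nu>)"
  proof -
    have "s powr (\<mu> - \<nu>) = s powr \<mu> * s powr (-\<nu>)" by (simp add: powr_add[symmetric])
    thus ?thesis by simp
  qed
  also have "\<dots> \<le> N1M / L1m * \<alpha>0 powr (\<mu> - \<nu>)"
    using s mu N1M L1m by (intro mult_left_mono powr_mono2) auto
  finally show "N s / L s \<le> N1M / L1m * \<alpha>0 powr (\<mu> - \<nu>)" .
qed

lemma cNL: "continuous_on {0<..\<alpha>0} (\<lambda>s. N s / L s)"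
proof -
  have nz: "\<forall>s\<in>{0<..\<alpha>0}. L s \<noteq> 0" using Lpos by (metis less_irrefl)
  show ?thesis using cL cN nz by (intro continuous_intros) auto
qed

lemma int_NL: "(\<lambda>s. N s / L s) integrable_on {0..\<alpha>0}"
  by (rule int_bound_oc[OF cNL, of "N1M / L1m * \<alpha>0 powr (\<mu> - \<nu>)"]) (metis NL_bound abs_of_nonneg)

lemma int_NL_sub: "t \<in> {0..\<alpha>0} \<Longrightarrow> (\<lambda>s. N s / L s) integrable_on {0..t}"
  by (rule integrable_on_subinterval[OF int_NL]) auto

lemma int_NL_nonneg: "t \<in> {0..\<alpha>0} \<Longrightarrow> 0 \<le> integral {0..t} (\<lambda>s. N s / L s)"
  unfolding oc_int_eq
  by (rule integral_nonneg) (use int_NL_sub oc_integrable_eq NL_bound in auto)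

lemma E1_cont: "continuous_on {0..\<alpha>0} (E1 a \<alpha>0 L N)"
  unfolding E1_def
  by (intro continuous_intros indefinite_integral_continuous_1 int_NL)

lemma E1_pos: "0 < E1 a \<alpha>0 L N t" by (simp add: E1_def)

lemma E1_le1: "t \<in> {0..\<alpha>0} \<Longrightarrow> E1 a \<alpha>0 L N t \<le> 1"
  unfolding E1_def using int_NL_nonneg[of t] a al by (simp add: mult_nonneg_nonneg)

lemma G_bound: assumes "s \<in> {0<..\<alpha>0}"
  shows "0 \<le> E1 a \<alpha>0 L N s / (s * L s)" "E1 a \<alpha>0 L N s / (s * L s) \<le> \<alpha>0 powr (\<mu> - 1) / L1m"
proof -
  have s: "s > 0" "s \<le> \<alpha>0" using assms by auto
  show "0 \<le> E1 a \<alpha>0 L N s / (s * L s)" using E1_pos[of s] Lpos[OF assms] s by simp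
  have "E1 a \<alpha>0 L N s / (s * L s) = E1 a \<alpha>0 L N s * (1 / L s) / s" by simp
  also have "\<dots> \<le> 1 * (s powr \<mu> / L1m) / s"
    using E1_le1[of s] invL[OF assms] Lpos[OF assms] s E1_pos[of s]
    by (intro divide_right_mono mult_mono) auto
  also have "\<dots> = s powr (\<mu> - 1) / L1m" using s by (simp add: powr_diff)
  also have "\<dots> \<le> \<alpha>0 powr (\<mu> - 1) / L1m"
    using s mu L1m by (intro divide_right_mono powr_mono2) auto
  finally show "E1 a \<alpha>0 L N s / (s * L s) \<le> \<alpha>0 powr (\<mu> - 1) / L1m" .
qed

lemma cG: "continuous_on {0<..\<alpha>0} (\<lambda>s. E1 a \<alpha>0 L N s / (s * L s))"
proof -
  have "continuous_on {0<..\<alpha>0} (E1 a \<alpha>0 L N)" by (rule continuous_on_subset[OF E1_cont]) auto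
  moreover have nz: "\<forall>s\<in>{0<..\<alpha>0}. s * L s \<noteq> 0" using Lpos by fastforce
  ultimately show ?thesis using cL by (intro continuous_intros) auto
qed

lemma int_G: "(\<lambda>s. E1 a \<alpha>0 L N s / (s * L s)) integrable_on {0..\<alpha>0}"
  by (rule int_bound_oc[OF cG, of "\<alpha>0 powr (\<mu> - 1) / L1m"]) (metis G_bound abs_of_nonneg)

lemma F1_cont: "continuous_on {0..\<alpha>0} (F1 a \<alpha>0 L N)"
  unfolding F1_def[abs_def] by (rule indefinite_integral_continuous_1[OF int_G])

end

lemma alg1:
  fixes s L k1 k2 A a n m b P q :: real
  assumes "s > 0" "L > 0" "k1 > 0" "k2 > 0"
  shows "((A * a * (n/L * (P * s / k1) + m/L^2 * (P * P * q * s / k2))) * (P / L) + 1 * (b * (P / L) * (P / L))) / s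
    = A*a/L^2 * (n/k1 * (P*P) + m/(L*k2) * (P*P*P*q)) + b/L^2 * (P*P/s)"
  using assms by (simp add: field_simps power2_eq_square)

lemma alg2:
  fixes A a N M B d L X Y Z k1 k2 k3 k4 k5 :: real
  assumes "L > 0" "k1 > 0" "k2 > 0" "k3 > 0" "k4 > 0" "k5 > 0"
  shows "A*a/L^2 * (N*d/k1 * (X/k2) + M*B*d/(L*k3) * (Y/k4)) + B*d/L^2 * (Z/k5)
     = (A * a / L^2 * (N * X / (k1 * k2) + B * M / L * Y / (k3 * k4)) + B / L^2 * Z / k5) * d"
  using assms by (simp add: field_simps power2_eq_square)

locale Upair = U: Ufun a \<alpha>0 \<mu> \<nu> L1m N1M L N + V: Ufun a \<alpha>0 \<mu> \<nu> L1m N1M L' N'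
  for a \<alpha>0 \<mu> \<nu> L1m N1M and L N L' N' :: "real \<Rightarrow> real" +
  fixes L1b N1b d :: real
  assumes L1b: "L1b \<ge> 0" and N1b: "N1b \<ge> 0" and d: "d \<ge> 0"
    and dL: "\<And>s. s \<in> {0<..\<alpha>0} \<Longrightarrow> \<bar>L s - L' s\<bar> \<le> L1b * d"
    and dN: "\<And>s. s \<in> {0<..\<alpha>0} \<Longrightarrow> \<bar>N s - N' s\<bar> \<le> N1b * d"
begin

definition "bb s = N1b*d/L1m * s powr \<mu> + N1M*L1b*d/L1m^2 * s powr (2*\<mu>-\<nu>)"
definition "BB t = N1b*d/L1m * (t powr (\<mu>+1)/(\<mu>+1)) + N1M*L1b*d/L1m^2 * (t powr (2*\<mu>-\<nu>+1)/(2*\<mu>-\<nu>+1))"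
definition "cc s = \<alpha>0*a/L1m^2 * (N1b*d/(\<mu>+1) * s powr (2*\<mu>) + N1M*L1b*d/(L1m*(2*\<mu>-\<nu>+1)) * s powr (3*\<mu>-\<nu>))
   + L1b*d/L1m^2 * s powr (2*\<mu>-1)"

lemma b_bound: assumes s: "s \<in> {0<..\<alpha>0}" shows "\<bar>N s / L s - N' s / L' s\<bar> \<le> bb s"
proof -
  have s0: "s > 0" using s by auto
  define P where "P = s powr \<mu>"
  have P: "P > 0" using s0 by (simp add: P_def)
  have l: "L s > 0" "L' s > 0" using U.Lpos[OF s] V.Lpos[OF s] .
  have il: "1 / L s \<le> P / L1m" "1 / L' s \<le> P / L1m" using U.invL[OF s] V.invL[OF s] by (auto simp: P_def)
  have n: "0 \<le> N' s" "N' s \<le> N1M * s powr (-\<nu>)" using V.bN[OF s] by auto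
  have eq: "N s / L s - N' s / L' s = (N s - N' s) * (1 / L s) + N' s * (L' s - L s) * (1 / L s) * (1 / L' s)"
    using l by (simp add: field_simps)
  have "\<bar>N s / L s - N' s / L' s\<bar> \<le> \<bar>N s - N' s\<bar> * (1 / L s) + N' s * \<bar>L' s - L s\<bar> * (1 / L s) * (1 / L' s)"
    unfolding eq using l n by (intro order_trans[OF abs_triangle_ineq]) (simp add: abs_mult)
  also have "\<dots> \<le> (N1b * d) * (P / L1m) + (N1M * s powr (-\<nu>)) * (L1b * d) * (P / L1m) * (P / L1m)"
  proof (intro add_mono mult_mono)
  qed (use dN[OF s] dL[OF s] il n l P U.N1M U.L1m L1b d N1b in \<open>auto simp: abs_minus_commute\<close>)
  also have "\<dots> = bb s"
  proof -
    have "s powr (2*\<mu>-\<nu>) = P * P * s powr (-\<nu>)" unfolding P_def by (simp add: powr_add[symmetric])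
    thus ?thesis unfolding bb_def P_def[symmetric] by (simp add: power2_eq_square)
  qed
  finally show ?thesis .
qed

lemma has_int_b: assumes "t \<ge> 0" shows "(bb has_integral BB t) {0..t}"
proof -
  have m: "\<mu> > -1" "2*\<mu>-\<nu> > -1" using U.mu by auto
  have "((\<lambda>s. N1b*d/L1m * s powr \<mu> + N1M*L1b*d/L1m^2 * s powr (2*\<mu>-\<nu>)) has_integral
     (N1b*d/L1m * (t powr (\<mu>+1)/(\<mu>+1)) + N1M*L1b*d/L1m^2 * (t powr (2*\<mu>-\<nu>+1)/(2*\<mu>-\<nu>+1)))) {0..t}"
    by (intro has_integral_add has_integral_mult_right has_integral_powr_from_0 m assms)
  thus ?thesis unfolding bb_def[abs_def] BB_def .
qed

lemma int_b: "t \<ge> 0 \<Longrightarrow> bb integrable_on {0<..t}"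
  using has_int_b oc_integrable_eq by blast

lemma E_diff: assumes s: "s \<in> {0<..\<alpha>0}"
  shows "\<bar>E1 a \<alpha>0 L N s - E1 a \<alpha>0 L' N' s\<bar> \<le> \<alpha>0 * a * BB s"
proof -
  have s0: "s \<in> {0..\<alpha>0}" "s \<ge> 0" using s by auto
  have i1: "(\<lambda>s. N s / L s) integrable_on {0<..s}" using U.int_NL_sub[OF s0(1)] oc_integrable_eq by blast
  have i2: "(\<lambda>s. N' s / L' s) integrable_on {0<..s}" using V.int_NL_sub[OF s0(1)] oc_integrable_eq by blast
  have "\<bar>integral {0..s} (\<lambda>s. N s / L s) - integral {0..s} (\<lambda>s. N' s / L' s)\<bar>
      = \<bar>integral {0<..s} (\<lambda>x. N x / L x - N' x / L' x)\<bar>"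
    unfolding oc_int_eq by (simp add: integral_diff[OF i1 i2])
  also have "\<dots> \<le> integral {0<..s} bb"
    using integral_norm_bound_integral[OF integrable_diff[OF i1 i2] int_b[OF s0(2)]] b_bound s
    by auto
  also have "\<dots> = BB s" using has_int_b[OF s0(2)] oc_int_eq by (metis integral_unique)
  finally have I: "\<bar>integral {0..s} (\<lambda>s. N s / L s) - integral {0..s} (\<lambda>s. N' s / L' s)\<bar> \<le> BB s" .
  have "\<bar>E1 a \<alpha>0 L N s - E1 a \<alpha>0 L' N' s\<bar> \<le>
     \<bar>(\<alpha>0 * a) * integral {0..s} (\<lambda>s. N s / L s) - (\<alpha>0 * a) * integral {0..s} (\<lambda>s. N' s / L' s)\<bar>"
    using exp_lip[of "\<alpha>0 * a * integral {0..s} (\<lambda>s. N s / L s)" "\<alpha>0 * a * integral {0..s} (\<lambda>s. N' s / L' s)"]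
      U.int_NL_nonneg[OF s0(1)] V.int_NL_nonneg[OF s0(1)] U.al U.a
    unfolding E1_def by simp
  also have "\<dots> = (\<alpha>0 * a) * \<bar>integral {0..s} (\<lambda>s. N s / L s) - integral {0..s} (\<lambda>s. N' s / L' s)\<bar>"
    using U.al U.a by (simp add: abs_mult right_diff_distrib[symmetric])
  also have "\<dots> \<le> \<alpha>0 * a * BB s" using I U.al U.a by (intro mult_left_mono) auto
  finally show ?thesis .
qed

lemma G_diff: assumes s: "s \<in> {0<..\<alpha>0}"
  shows "\<bar>E1 a \<alpha>0 L N s / (s * L s) - E1 a \<alpha>0 L' N' s / (s * L' s)\<bar> \<le> cc s"
proof -
  have s0: "s > 0" using s by auto
  define P where "P = s powr \<mu>"
  have P: "P > 0" using s0 by (simp add: P_def)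
  have l: "L s > 0" "L' s > 0" using U.Lpos[OF s] V.Lpos[OF s] .
  have il: "1 / L s \<le> P / L1m" "1 / L' s \<le> P / L1m" using U.invL[OF s] V.invL[OF s] by (auto simp: P_def)
  define E where "E = E1 a \<alpha>0 L N s"
  define E' where "E' = E1 a \<alpha>0 L' N' s"
  have E': "0 < E'" "E' \<le> 1" using V.E1_pos V.E1_le1[of s] s unfolding E'_def by auto
  have dE: "\<bar>E - E'\<bar> \<le> \<alpha>0 * a * BB s" using E_diff[OF s] unfolding E_def E'_def .
  have eq: "E / (s * L s) - E' / (s * L' s) = ((E - E') * (1 / L s) + E' * ((L' s - L s) * (1 / L s) * (1 / L' s))) / s"
    using l s0 by (simp add: field_simps)
  have "\<bar>E / (s * L s) - E' / (s * L' s)\<bar> \<le> (\<bar>E - E'\<bar> * (1 / L s) + E' * (\<bar>L' s - L s\<bar> * (1 / L s) * (1 / L' s))) / s"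
  proof -
    have "\<bar>E / (s * L s) - E' / (s * L' s)\<bar> = \<bar>(E - E') * (1 / L s) + E' * ((L' s - L s) * (1 / L s) * (1 / L' s))\<bar> / s"
      by (simp only: eq abs_divide abs_of_pos[OF s0])
    also have "\<dots> \<le> (\<bar>E - E'\<bar> * (1 / L s) + E' * (\<bar>L' s - L s\<bar> * (1 / L s) * (1 / L' s))) / s"
      using l s0 E' by (intro divide_right_mono order_trans[OF abs_triangle_ineq]) (auto simp add: abs_mult)
    finally show ?thesis .
  qed
  also have "\<dots> \<le> ((\<alpha>0 * a * BB s) * (P / L1m) + 1 * ((L1b * d) * (P / L1m) * (P / L1m))) / s"
  proof (intro divide_right_mono add_mono mult_mono)
  qed (use dE dL[OF s] il l P E' U.L1m L1b d N1b U.al U.a s0 in \<open>auto simp: abs_minus_commute\<close>)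
  also have "\<dots> = cc s"
  proof -
    have e1: "s powr (\<mu>+1) = P * s" unfolding P_def using s0 by (simp add: powr_add)
    have e2: "s powr (2*\<mu>-\<nu>+1) = P * P * s powr (-\<nu>) * s"
    proof -
      have "s powr (2*\<mu>-\<nu>+1) = s powr (2*\<mu>-\<nu>) * s powr 1" by (rule powr_add)
      moreover have "s powr (2*\<mu>-\<nu>) = P * P * s powr (-\<nu>)" unfolding P_def by (simp add: powr_add[symmetric])
      ultimately show ?thesis using s0 by simp
    qed
    have e3: "s powr (2*\<mu>) = P * P" unfolding P_def by (simp add: powr_add[symmetric])
    have e4: "s powr (3*\<mu>-\<nu>) = P * P * P * s powr (-\<nu>)" unfolding P_def by (simp add: powr_add[symmetric])
    have e5: "s powr (2*\<mu>-1) = P * P / s" unfolding P_def using s0 by (simp add: powr_add[symmetric] powr_diff)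
    have "\<mu>+1 > 0" "2*\<mu>-\<nu>+1 > 0" using U.mu by auto
    from alg1[OF s0 U.L1m this, where A=\<alpha>0 and a=a and n="N1b*d" and m="N1M*L1b*d" and P=P and q="s powr (-\<nu>)" and b="L1b*d"]
    show ?thesis unfolding cc_def BB_def e1 e2 e3 e4 e5 by (simp add: mult.assoc)
  qed
  finally show ?thesis unfolding E_def E'_def .
qed

definition "CC t = \<alpha>0*a/L1m^2 * (N1b*d/(\<mu>+1) * (t powr (2*\<mu>+1)/(2*\<mu>+1)) + N1M*L1b*d/(L1m*(2*\<mu>-\<nu>+1)) * (t powr (3*\<mu>-\<nu>+1)/(3*\<mu>-\<nu>+1)))
   + L1b*d/L1m^2 * (t powr (2*\<mu>-1+1)/(2*\<mu>-1+1))"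

lemma has_int_c: assumes "t \<ge> 0" shows "(cc has_integral CC t) {0..t}"
proof -
  have m: "2*\<mu> > -1" "3*\<mu>-\<nu> > -1" "2*\<mu>-1 > -1" using U.mu by auto
  show ?thesis unfolding cc_def[abs_def] CC_def
    by (intro has_integral_add has_integral_mult_right has_integral_powr_from_0 m assms)
qed

lemma cc_nonneg: "s \<ge> 0 \<Longrightarrow> cc s \<ge> 0"
  unfolding cc_def using U.mu U.a U.al U.L1m U.N1M L1b N1b d
  by (intro add_nonneg_nonneg mult_nonneg_nonneg divide_nonneg_nonneg) auto

lemma CC_eq: "CC \<alpha>0 = Fbar1 a \<mu> \<nu> L1m N1M L1b N1b \<alpha>0 * d"
proof -
  have k: "\<mu>+1 > 0" "2*\<mu>+1 > 0" "2*\<mu>-\<nu>+1 > 0" "3*\<mu>-\<nu>+1 > 0" "2*\<mu> > 0" using U.mu by auto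
  show ?thesis unfolding CC_def Fbar1_def
    using alg2[OF U.L1m k, where A=\<alpha>0 and a=a and N=N1b and M=N1M and B=L1b and d=d
      and X="\<alpha>0 powr (2*\<mu>+1)" and Y="\<alpha>0 powr (3*\<mu>-\<nu>+1)" and Z="\<alpha>0 powr (2*\<mu>)"]
    by simp
qed

lemma F_diff: assumes t: "t \<in> {0..\<alpha>0}"
  shows "\<bar>F1 a \<alpha>0 L N t - F1 a \<alpha>0 L' N' t\<bar> \<le> Fbar1 a \<mu> \<nu> L1m N1M L1b N1b \<alpha>0 * d"
proof -
  have t0: "t \<ge> 0" using t by auto
  have i1: "(\<lambda>s. E1 a \<alpha>0 L N s / (s * L s)) integrable_on {0<..t}"
    using integrable_on_subinterval[OF U.int_G, of 0 t] t oc_integrable_eq by auto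
  have i2: "(\<lambda>s. E1 a \<alpha>0 L' N' s / (s * L' s)) integrable_on {0<..t}"
    using integrable_on_subinterval[OF V.int_G, of 0 t] t oc_integrable_eq by auto
  have ic: "cc integrable_on {0<..t}" using has_int_c[OF t0] oc_integrable_eq by blast
  have "\<bar>F1 a \<alpha>0 L N t - F1 a \<alpha>0 L' N' t\<bar> = \<bar>integral {0<..t} (\<lambda>s. E1 a \<alpha>0 L N s / (s * L s) - E1 a \<alpha>0 L' N' s / (s * L' s))\<bar>"
    unfolding F1_def oc_int_eq by (simp add: integral_diff[OF i1 i2])
  also have "\<dots> \<le> integral {0<..t} cc"
    using integral_norm_bound_integral[OF integrable_diff[OF i1 i2] ic] G_diff t by auto
  also have "\<dots> = integral {0..t} cc" by (simp add: oc_int_eq)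
  also have "\<dots> \<le> integral {0..\<alpha>0} cc"
    using t has_int_c[OF t0] has_int_c[of \<alpha>0] U.al cc_nonneg
    by (intro integral_subset_le) auto
  also have "\<dots> = CC \<alpha>0" using has_int_c[of \<alpha>0] U.al by (simp add: integral_unique)
  finally show ?thesis unfolding CC_eq .
qed

end

lemma indef_cont_inf:
  fixes f :: "real \<Rightarrow> real"
  assumes "f integrable_on {a..}"
  shows "continuous_on {a..} (\<lambda>x. integral {a..x} f)"
  unfolding continuous_on_eq_continuous_within
proof
  fix x assume x: "x \<in> {a..}"
  have "continuous_on {a..x+1} (\<lambda>x. integral {a..x} f)"
    by (rule indefinite_integral_continuous_1, rule integrable_on_subinterval[OF assms]) auto
  hence "continuous (at x within {a..x+1}) (\<lambda>x. integral {a..x} f)"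
    using x by (simp add: continuous_on_eq_continuous_within)
  moreover have "at x within {a..} = at x within {a..x+1}"
    by (rule at_within_nhd[where S="{..<x+1}"]) auto
  ultimately show "continuous (at x within {a..}) (\<lambda>x. integral {a..x} f)" by simp
qed

lemma int_bound_inf:
  fixes g :: "real \<Rightarrow> real"
  assumes "continuous_on {c..} g" "\<And>x. x \<ge> c \<Longrightarrow> \<bar>g x\<bar> \<le> K * x powr e" "e < -1" "c > 0"
  shows "g integrable_on {c..}"
proof (rule int_bound[OF assms(1)])
  show "(\<lambda>x. K * x powr e) integrable_on {c..}"
    using has_integral_mult_right[OF has_integral_powr_to_inf[OF assms(3,4)]] unfolding integrable_on_def by blast
qed (use assms in auto)

locale Wfun =
  fixes a \<alpha>0 \<beta> \<sigma> L2m L2M N2M :: real and L N :: "real \<Rightarrow> real"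
  assumes a: "a > 0" and al: "\<alpha>0 > 0" and bs: "\<sigma> > 0" "\<beta> > \<sigma> + 2"
    and L2m: "L2m > 0" and L2M: "L2M > 0" and N2M: "N2M > 0"
    and bL: "\<And>s. s \<ge> \<alpha>0 \<Longrightarrow> L2m * s powr \<beta> \<le> L s \<and> L s \<le> L2M * s powr \<beta>"
    and bN: "\<And>s. s \<ge> \<alpha>0 \<Longrightarrow> 0 \<le> N s \<and> N s \<le> N2M * s powr \<sigma>"
    and cL: "continuous_on {\<alpha>0..} L" and cN: "continuous_on {\<alpha>0..} N"
begin

lemma Lpos: "s \<ge> \<alpha>0 \<Longrightarrow> L s > 0"
proof -
  assume s: "s \<ge> \<alpha>0"
  have "0 < L2m * s powr \<beta>" using L2m s al by simp
  thus ?thesis using bL[OF s] by linarith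
qed

lemma invL: assumes s: "s \<ge> \<alpha>0" shows "1 / L s \<le> s powr (-\<beta>) / L2m"
proof -
  have s0: "s > 0" using s al by auto
  have "L2m * s powr \<beta> \<le> L s" using bL[OF s] by auto
  hence "1 / L s \<le> 1 / (L2m * s powr \<beta>)" using L2m s0 Lpos[OF s] by (intro divide_left_mono) auto
  thus ?thesis by (simp add: powr_minus divide_inverse mult.commute)
qed

lemma invL2: assumes s: "s \<ge> \<alpha>0" shows "s powr (-\<beta>) / L2M \<le> 1 / L s"
proof -
  have s0: "s > 0" using s al by auto
  have "L s \<le> L2M * s powr \<beta>" using bL[OF s] by auto
  hence "1 / (L2M * s powr \<beta>) \<le> 1 / L s" using L2M s0 Lpos[OF s] by (intro divide_left_mono) auto
  thus ?thesis by (simp add: powr_minus divide_inverse mult.commute)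
qed

definition "K1 = N2M / L2m * (-(\<alpha>0 powr (\<sigma>-\<beta>+1)) / (\<sigma>-\<beta>+1))"

lemma NL_bound: assumes s: "s \<ge> \<alpha>0" shows "0 \<le> N s / L s" "N s / L s \<le> N2M / L2m * s powr (\<sigma> - \<beta>)"
proof -
  show "0 \<le> N s / L s" using bN[OF s] Lpos[OF s] by simp
  have "N s / L s = N s * (1 / L s)" by simp
  also have "\<dots> \<le> (N2M * s powr \<sigma>) * (s powr (-\<beta>) / L2m)"
    using bN[OF s] invL[OF s] Lpos[OF s] by (intro mult_mono) auto
  also have "\<dots> = N2M / L2m * s powr (\<sigma> - \<beta>)"
  proof -
    have "s powr (\<sigma> - \<beta>) = s powr \<sigma> * s powr (-\<beta>)" by (simp add: powr_add[symmetric])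
    thus ?thesis by simp
  qed
  finally show "N s / L s \<le> N2M / L2m * s powr (\<sigma> - \<beta>)" .
qed

lemma cNL: "continuous_on {\<alpha>0..} (\<lambda>s. N s / L s)"
proof -
  have nz: "\<forall>s\<in>{\<alpha>0..}. L s \<noteq> 0" using Lpos by (metis atLeast_iff less_irrefl)
  show ?thesis using cL cN nz by (intro continuous_intros) auto
qed

lemma has_int_NLb: "((\<lambda>s. N2M / L2m * s powr (\<sigma> - \<beta>)) has_integral K1) {\<alpha>0..}"
  unfolding K1_def using bs al by (intro has_integral_mult_right has_integral_powr_to_inf) auto

lemma int_NL: "(\<lambda>s. N s / L s) integrable_on {\<alpha>0..}"
  apply (rule int_bound_inf[OF cNL, of "N2M / L2m" "\<sigma> - \<beta>"])
  apply (metis NL_bound abs_of_nonneg)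
  using bs al by auto

lemma int_NL_sub: "(\<lambda>s. N s / L s) integrable_on {\<alpha>0..t}"
  by (rule integrable_on_subinterval[OF int_NL]) auto

lemma I_bounds: assumes "t \<ge> \<alpha>0"
  shows "0 \<le> integral {\<alpha>0..t} (\<lambda>s. N s / L s)" "integral {\<alpha>0..t} (\<lambda>s. N s / L s) \<le> K1"
proof -
  show "0 \<le> integral {\<alpha>0..t} (\<lambda>s. N s / L s)"
    by (rule integral_nonneg[OF int_NL_sub]) (use NL_bound in auto)
  have "integral {\<alpha>0..t} (\<lambda>s. N s / L s) \<le> integral {\<alpha>0..} (\<lambda>s. N s / L s)"
    by (rule integral_subset_le[OF _ int_NL_sub int_NL]) (use NL_bound in auto)
  also have "\<dots> \<le> integral {\<alpha>0..} (\<lambda>s. N2M / L2m * s powr (\<sigma> - \<beta>))"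
    by (rule integral_le[OF int_NL]) (use has_int_NLb NL_bound in auto)
  also have "\<dots> = K1" using has_int_NLb by (rule integral_unique)
  finally show "integral {\<alpha>0..t} (\<lambda>s. N s / L s) \<le> K1" .
qed

lemma E2_cont: "continuous_on {\<alpha>0..} (E2 a \<alpha>0 L N)"
  unfolding E2_def by (intro continuous_intros indef_cont_inf int_NL)

lemma E2_pos: "0 < E2 a \<alpha>0 L N t" by (simp add: E2_def)

lemma E2_le1: "t \<ge> \<alpha>0 \<Longrightarrow> E2 a \<alpha>0 L N t \<le> 1"
  unfolding E2_def using I_bounds[of t] a al by (simp add: mult_nonneg_nonneg)

lemma E2_ge: "t \<ge> \<alpha>0 \<Longrightarrow> exp (-(\<alpha>0 * a * K1)) \<le> E2 a \<alpha>0 L N t"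
  unfolding E2_def using I_bounds[of t] a al by (simp add: mult_left_mono)

abbreviation "G s \<equiv> E2 a \<alpha>0 L N s / (s * L s)"

lemma G_bound: assumes s: "s \<ge> \<alpha>0"
  shows "0 \<le> G s" "G s \<le> 1 / L2m * s powr (-\<beta>-1)"
proof -
  have s0: "s > 0" using s al by auto
  show "0 \<le> G s" using E2_pos[of s] Lpos[OF s] s0 by simp
  have "G s = E2 a \<alpha>0 L N s * (1 / L s) / s" by simp
  also have "\<dots> \<le> 1 * (s powr (-\<beta>) / L2m) / s"
    using E2_le1[OF s] invL[OF s] Lpos[OF s] s0 E2_pos[of s]
    by (intro divide_right_mono mult_mono) auto
  also have "\<dots> = 1 / L2m * s powr (-\<beta>-1)" using s0 by (simp add: powr_diff)
  finally show "G s \<le> 1 / L2m * s powr (-\<beta>-1)" .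
qed

lemma G_lower: assumes s: "s \<ge> \<alpha>0"
  shows "exp (-(\<alpha>0 * a * K1)) / L2M * s powr (-\<beta>-1) \<le> G s"
proof -
  have s0: "s > 0" using s al by auto
  have "exp (-(\<alpha>0 * a * K1)) / L2M * s powr (-\<beta>-1) = exp (-(\<alpha>0 * a * K1)) * (s powr (-\<beta>) / L2M) / s"
    using s0 by (simp add: powr_diff)
  also have "\<dots> \<le> E2 a \<alpha>0 L N s * (1 / L s) / s"
    using E2_ge[OF s] invL2[OF s] Lpos[OF s] s0 L2M E2_pos[of s]
    by (intro divide_right_mono mult_mono) auto
  also have "\<dots> = G s" by simp
  finally show ?thesis .
qed

lemma cG: "continuous_on {\<alpha>0..} G"
proof -
  have nz: "\<forall>s\<in>{\<alpha>0..}. s * L s \<noteq> 0" using Lpos al by fastforce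
  show ?thesis using E2_cont cL nz by (intro continuous_intros) auto
qed

lemma int_G_from: "t \<ge> \<alpha>0 \<Longrightarrow> G integrable_on {t..}"
proof -
  assume t: "t \<ge> \<alpha>0"
  show ?thesis
  proof (rule int_bound_inf[OF continuous_on_subset[OF cG], of t "1 / L2m" "-\<beta>-1"])
    fix x assume "x \<ge> t"
    hence x: "x \<ge> \<alpha>0" using t by auto
    show "\<bar>G x\<bar> \<le> 1 / L2m * x powr (-\<beta>-1)" using G_bound[OF x] by (simp only: abs_of_nonneg)
  qed (use t bs al in auto)
qed

lemma int_G: "G integrable_on {\<alpha>0..}" using int_G_from by auto

lemma F2_cont: "continuous_on {\<alpha>0..} (F2 a \<alpha>0 L N)"
  unfolding F2_def[abs_def] by (rule indef_cont_inf[OF int_G])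

lemma F2_bounds: assumes "t \<ge> \<alpha>0"
  shows "0 \<le> F2 a \<alpha>0 L N t" "F2 a \<alpha>0 L N t \<le> F2inf a \<alpha>0 L N"
proof -
  have i: "G integrable_on {\<alpha>0..t}" by (rule integrable_on_subinterval[OF int_G]) auto
  show "0 \<le> F2 a \<alpha>0 L N t" unfolding F2_def by (rule integral_nonneg[OF i]) (use G_bound in auto)
  show "F2 a \<alpha>0 L N t \<le> F2inf a \<alpha>0 L N" unfolding F2_def F2inf_def
    by (rule integral_subset_le[OF _ i int_G]) (use G_bound in auto)
qed

definition "LB = exp (-(\<alpha>0 * a * K1)) / L2M * (-(\<alpha>0 powr (-\<beta>-1+1)) / (-\<beta>-1+1))"

lemma F2inf_lower: "LB \<le> F2inf a \<alpha>0 L N"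
proof -
  have h: "((\<lambda>s. exp (-(\<alpha>0 * a * K1)) / L2M * s powr (-\<beta>-1)) has_integral LB) {\<alpha>0..}"
    unfolding LB_def using bs al by (intro has_integral_mult_right has_integral_powr_to_inf) auto
  show ?thesis unfolding F2inf_def
    by (rule has_integral_le[OF h integrable_integral[OF int_G]]) (use G_lower in auto)
qed

lemma LB_pos: "LB > 0"
  unfolding LB_def using bs al L2M by (auto intro!: mult_pos_pos divide_pos_pos)

lemma F2inf_pos: "F2inf a \<alpha>0 L N > 0" using F2inf_lower LB_pos by linarith

lemma F2_tendsto: "(F2 a \<alpha>0 L N \<longlongrightarrow> F2inf a \<alpha>0 L N) at_top"
proof (rule LIM_zero_cancel, rule Lim_null_comparison)
  show "\<forall>\<^sub>F x in at_top. norm (F2 a \<alpha>0 L N x - F2inf a \<alpha>0 L N) \<le> 1 / L2m * (-(x powr (-\<beta>-1+1)) / (-\<beta>-1+1))"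
    using eventually_ge_at_top[of \<alpha>0]
  proof eventually_elim
    case (elim x)
    have x0: "x > 0" using elim al by auto
    have split: "F2inf a \<alpha>0 L N = F2 a \<alpha>0 L N x + integral {x..} G"
    proof -
      have "{\<alpha>0..} = {\<alpha>0..x} \<union> {x..}" using elim by auto
      moreover have "integral ({\<alpha>0..x} \<union> {x..}) G = integral {\<alpha>0..x} G + integral {x..} G"
        by (rule integral_Un[OF integrable_on_subinterval[OF int_G] int_G_from[OF elim]])
           (use elim in \<open>auto intro: negligible_subset[of "{x}"]\<close>)
      ultimately show ?thesis unfolding F2inf_def F2_def by simp
    qed
    have h: "((\<lambda>s. 1 / L2m * s powr (-\<beta>-1)) has_integral 1 / L2m * (-(x powr (-\<beta>-1+1)) / (-\<beta>-1+1))) {x..}"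
      using bs x0 by (intro has_integral_mult_right has_integral_powr_to_inf) auto
    have "integral {x..} G \<le> 1 / L2m * (-(x powr (-\<beta>-1+1)) / (-\<beta>-1+1))"
      by (rule has_integral_le[OF integrable_integral[OF int_G_from[OF elim]] h]) (use G_bound elim in auto)
    moreover have "0 \<le> integral {x..} G"
      by (rule integral_nonneg[OF int_G_from[OF elim]]) (use G_bound elim in auto)
    ultimately show ?case using split by simp
  qed
  show "((\<lambda>x. 1 / L2m * (-(x powr (-\<beta>-1+1)) / (-\<beta>-1+1))) \<longlongrightarrow> 0) at_top"
  proof -
    have "((\<lambda>x. x powr (-\<beta>-1+1)) \<longlongrightarrow> 0) at_top"
      using bs by (intro tendsto_neg_powr filterlim_ident) auto
    hence "((\<lambda>x. 1 / L2m * (-(x powr (-\<beta>-1+1)) / (-\<beta>-1+1))) \<longlongrightarrow> 1 / L2m * (-0 / (-\<beta>-1+1))) at_top"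
      by (intro tendsto_intros) (use bs in auto)
    thus ?thesis by simp
  qed
qed

lemma W_inM: "inM \<alpha>0 (\<lambda>\<xi>. - F2 a \<alpha>0 L N \<xi> / F2inf a \<alpha>0 L N)"
  unfolding inM_def
proof (intro conjI)
  show "continuous_on {\<alpha>0..} (\<lambda>\<xi>. - F2 a \<alpha>0 L N \<xi> / F2inf a \<alpha>0 L N)"
    using F2inf_pos by (intro continuous_intros F2_cont) auto
  show "bounded ((\<lambda>\<xi>. - F2 a \<alpha>0 L N \<xi> / F2inf a \<alpha>0 L N) ` {\<alpha>0..})"
    unfolding bounded_iff
  proof (intro exI ballI)
    fix y assume "y \<in> (\<lambda>\<xi>. - F2 a \<alpha>0 L N \<xi> / F2inf a \<alpha>0 L N) ` {\<alpha>0..}"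
    then obtain \<xi> where "\<xi> \<ge> \<alpha>0" "y = - F2 a \<alpha>0 L N \<xi> / F2inf a \<alpha>0 L N" by auto
    thus "norm y \<le> 1" using F2_bounds[of \<xi>] F2inf_pos by (auto simp: abs_divide divide_le_eq)
  qed
  show "- F2 a \<alpha>0 L N \<alpha>0 / F2inf a \<alpha>0 L N = 0" by (simp add: F2_def)
  show "((\<lambda>\<xi>. - F2 a \<alpha>0 L N \<xi> / F2inf a \<alpha>0 L N) \<longlongrightarrow> -1) at_top"
  proof -
    have "((\<lambda>\<xi>. - F2 a \<alpha>0 L N \<xi> / F2inf a \<alpha>0 L N) \<longlongrightarrow> - F2inf a \<alpha>0 L N / F2inf a \<alpha>0 L N) at_top"
      by (intro tendsto_intros F2_tendsto) (use F2inf_pos in simp)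
    thus ?thesis using F2inf_pos by simp
  qed
qed

end

lemma alg4:
  fixes s L k A a n m b P q :: real
  assumes "s > 0" "L > 0"
  shows "((A * a * k) * (P / L) + 1 * (b * (P / L) * (P / L))) / s
    = A*a*k/L * (P / s) + b/L^2 * (P*P/s)"
  using assms by (simp add: field_simps power2_eq_square)

lemma alg5:
  fixes a al d N2b N2M L2b L2m p q B1 B2 \<beta> :: real
  assumes "al > 0" "L2m > 0" "p > 0" "B1 > 0" "B2 > 0" "\<beta> > 0"
  shows "al*a*(N2b*d/L2m * ((al/p)/B1) + N2M*L2b*d/L2m^2 * ((al*q/(p*p))/B2))/L2m * ((1/p)/\<beta>) + L2b*d/L2m^2 * ((1/(p*p))/(2*\<beta>))
    = (al * a / (\<beta> * L2m^2) * (N2b / B1 * (al/p) + L2b * N2M / (L2m * B2) * (al*q/(p*p))) * (1/p) + L2b / (2*\<beta>*L2m^2) * (1/(p*p))) * d"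
  using assms by (simp add: field_simps power2_eq_square)

locale Wpair = U: Wfun a \<alpha>0 \<beta> \<sigma> L2m L2M N2M L N + V: Wfun a \<alpha>0 \<beta> \<sigma> L2m L2M N2M L' N'
  for a \<alpha>0 \<beta> \<sigma> L2m L2M N2M and L N L' N' :: "real \<Rightarrow> real" +
  fixes L2b N2b d :: real
  assumes L2b: "L2b \<ge> 0" and N2b: "N2b \<ge> 0" and d: "d \<ge> 0"
    and dL: "\<And>s. s \<ge> \<alpha>0 \<Longrightarrow> \<bar>L s - L' s\<bar> \<le> L2b * d"
    and dN: "\<And>s. s \<ge> \<alpha>0 \<Longrightarrow> \<bar>N s - N' s\<bar> \<le> N2b * d"
begin

definition "bb s = N2b*d/L2m * s powr (-\<beta>) + N2M*L2b*d/L2m^2 * s powr (\<sigma>-2*\<beta>)"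
definition "BB = N2b*d/L2m * (-(\<alpha>0 powr (-\<beta>+1))/(-\<beta>+1)) + N2M*L2b*d/L2m^2 * (-(\<alpha>0 powr (\<sigma>-2*\<beta>+1))/(\<sigma>-2*\<beta>+1))"
definition "cc s = \<alpha>0*a*BB/L2m * s powr (-\<beta>-1) + L2b*d/L2m^2 * s powr (-2*\<beta>-1)"
definition "CC = \<alpha>0*a*BB/L2m * (-(\<alpha>0 powr (-\<beta>-1+1))/(-\<beta>-1+1)) + L2b*d/L2m^2 * (-(\<alpha>0 powr (-2*\<beta>-1+1))/(-2*\<beta>-1+1))"

lemma has_int_b: "(bb has_integral BB) {\<alpha>0..}"
  unfolding bb_def[abs_def] BB_def using U.bs U.al
  by (intro has_integral_add has_integral_mult_right has_integral_powr_to_inf) auto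

lemma bb_nonneg: "s \<ge> \<alpha>0 \<Longrightarrow> bb s \<ge> 0"
  unfolding bb_def using U.bs U.al U.L2m U.N2M L2b N2b d
  by (intro add_nonneg_nonneg mult_nonneg_nonneg divide_nonneg_nonneg) auto

lemma has_int_c: "(cc has_integral CC) {\<alpha>0..}"
  unfolding cc_def[abs_def] CC_def using U.bs U.al
  by (intro has_integral_add has_integral_mult_right has_integral_powr_to_inf) auto

lemma BB_nonneg: "BB \<ge> 0"
  using has_int_b bb_nonneg by (metis atLeast_iff has_integral_nonneg)

lemma cc_nonneg: "s \<ge> \<alpha>0 \<Longrightarrow> cc s \<ge> 0"
  unfolding cc_def using U.bs U.al U.a U.L2m BB_nonneg L2b d
  by (intro add_nonneg_nonneg mult_nonneg_nonneg divide_nonneg_nonneg) auto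

lemma b_bound: assumes s: "s \<ge> \<alpha>0" shows "\<bar>N s / L s - N' s / L' s\<bar> \<le> bb s"
proof -
  have s0: "s > 0" using s U.al by auto
  define P where "P = s powr (-\<beta>)"
  have P: "P > 0" using s0 by (simp add: P_def)
  have l: "L s > 0" "L' s > 0" using U.Lpos[OF s] V.Lpos[OF s] .
  have il: "1 / L s \<le> P / L2m" "1 / L' s \<le> P / L2m" using U.invL[OF s] V.invL[OF s] by (auto simp: P_def)
  have n: "0 \<le> N' s" "N' s \<le> N2M * s powr \<sigma>" using V.bN[OF s] by auto
  have eq: "N s / L s - N' s / L' s = (N s - N' s) * (1 / L s) + N' s * (L' s - L s) * (1 / L s) * (1 / L' s)"
    using l by (simp add: field_simps)
  have "\<bar>N s / L s - N' s / L' s\<bar> \<le> \<bar>N s - N' s\<bar> * (1 / L s) + N' s * \<bar>L' s - L s\<bar> * (1 / L s) * (1 / L' s)"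
    unfolding eq using l n by (intro order_trans[OF abs_triangle_ineq]) (simp add: abs_mult)
  also have "\<dots> \<le> (N2b * d) * (P / L2m) + (N2M * s powr \<sigma>) * (L2b * d) * (P / L2m) * (P / L2m)"
  proof (intro add_mono mult_mono)
  qed (use dN[OF s] dL[OF s] il n l P U.N2M U.L2m L2b d N2b in \<open>auto simp: abs_minus_commute\<close>)
  also have "\<dots> = bb s"
  proof -
    have "s powr (\<sigma>-2*\<beta>) = s powr \<sigma> * P * P" unfolding P_def by (simp add: powr_add[symmetric])
    thus ?thesis unfolding bb_def P_def[symmetric] by (simp add: power2_eq_square)
  qed
  finally show ?thesis .
qed

lemma E_diff: assumes s: "s \<ge> \<alpha>0"
  shows "\<bar>E2 a \<alpha>0 L N s - E2 a \<alpha>0 L' N' s\<bar> \<le> \<alpha>0 * a * BB"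
proof -
  have i1: "(\<lambda>s. N s / L s) integrable_on {\<alpha>0..s}" by (rule U.int_NL_sub)
  have i2: "(\<lambda>s. N' s / L' s) integrable_on {\<alpha>0..s}" by (rule V.int_NL_sub)
  have ib: "bb integrable_on {\<alpha>0..s}" by (rule integrable_on_subinterval[OF has_integral_integrable[OF has_int_b]]) auto
  have "\<bar>integral {\<alpha>0..s} (\<lambda>s. N s / L s) - integral {\<alpha>0..s} (\<lambda>s. N' s / L' s)\<bar>
      = \<bar>integral {\<alpha>0..s} (\<lambda>x. N x / L x - N' x / L' x)\<bar>"
    by (simp add: integral_diff[OF i1 i2])
  also have "\<dots> \<le> integral {\<alpha>0..s} bb"
    using integral_norm_bound_integral[OF integrable_diff[OF i1 i2] ib] b_bound by auto
  also have "\<dots> \<le> integral {\<alpha>0..} bb"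
    by (rule integral_subset_le[OF _ ib has_integral_integrable[OF has_int_b]]) (use bb_nonneg in auto)
  also have "\<dots> = BB" using has_int_b by (rule integral_unique)
  finally have I: "\<bar>integral {\<alpha>0..s} (\<lambda>s. N s / L s) - integral {\<alpha>0..s} (\<lambda>s. N' s / L' s)\<bar> \<le> BB" .
  have "\<bar>E2 a \<alpha>0 L N s - E2 a \<alpha>0 L' N' s\<bar> \<le>
     \<bar>(\<alpha>0 * a) * integral {\<alpha>0..s} (\<lambda>s. N s / L s) - (\<alpha>0 * a) * integral {\<alpha>0..s} (\<lambda>s. N' s / L' s)\<bar>"
    using exp_lip[of "\<alpha>0 * a * integral {\<alpha>0..s} (\<lambda>s. N s / L s)" "\<alpha>0 * a * integral {\<alpha>0..s} (\<lambda>s. N' s / L' s)"]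
      U.I_bounds[OF s] V.I_bounds[OF s] U.al U.a
    unfolding E2_def by simp
  also have "\<dots> = (\<alpha>0 * a) * \<bar>integral {\<alpha>0..s} (\<lambda>s. N s / L s) - integral {\<alpha>0..s} (\<lambda>s. N' s / L' s)\<bar>"
    using U.al U.a by (simp add: abs_mult right_diff_distrib[symmetric])
  also have "\<dots> \<le> \<alpha>0 * a * BB" using I U.al U.a by (intro mult_left_mono) auto
  finally show ?thesis .
qed

lemma G_diff: assumes s: "s \<ge> \<alpha>0"
  shows "\<bar>E2 a \<alpha>0 L N s / (s * L s) - E2 a \<alpha>0 L' N' s / (s * L' s)\<bar> \<le> cc s"
proof -
  have s0: "s > 0" using s U.al by auto
  define P where "P = s powr (-\<beta>)"
  have P: "P > 0" using s0 by (simp add: P_def)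
  have l: "L s > 0" "L' s > 0" using U.Lpos[OF s] V.Lpos[OF s] .
  have il: "1 / L s \<le> P / L2m" "1 / L' s \<le> P / L2m" using U.invL[OF s] V.invL[OF s] by (auto simp: P_def)
  define E where "E = E2 a \<alpha>0 L N s"
  define E' where "E' = E2 a \<alpha>0 L' N' s"
  have E': "0 < E'" "E' \<le> 1" using V.E2_pos V.E2_le1[OF s] unfolding E'_def by auto
  have dE: "\<bar>E - E'\<bar> \<le> \<alpha>0 * a * BB" using E_diff[OF s] unfolding E_def E'_def .
  have eq: "E / (s * L s) - E' / (s * L' s) = ((E - E') * (1 / L s) + E' * ((L' s - L s) * (1 / L s) * (1 / L' s))) / s"
    using l s0 by (simp add: field_simps)
  have "\<bar>E / (s * L s) - E' / (s * L' s)\<bar> \<le> (\<bar>E - E'\<bar> * (1 / L s) + E' * (\<bar>L' s - L s\<bar> * (1 / L s) * (1 / L' s))) / s"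
  proof -
    have "\<bar>E / (s * L s) - E' / (s * L' s)\<bar> = \<bar>(E - E') * (1 / L s) + E' * ((L' s - L s) * (1 / L s) * (1 / L' s))\<bar> / s"
      by (simp only: eq abs_divide abs_of_pos[OF s0])
    also have "\<dots> \<le> (\<bar>E - E'\<bar> * (1 / L s) + E' * (\<bar>L' s - L s\<bar> * (1 / L s) * (1 / L' s))) / s"
      using l s0 E' by (intro divide_right_mono order_trans[OF abs_triangle_ineq]) (auto simp add: abs_mult)
    finally show ?thesis .
  qed
  also have "\<dots> \<le> ((\<alpha>0 * a * BB) * (P / L2m) + 1 * ((L2b * d) * (P / L2m) * (P / L2m))) / s"
  proof (intro divide_right_mono add_mono mult_mono)
  qed (use dE dL[OF s] il l P E' U.L2m L2b d N2b U.al U.a s0 in \<open>auto simp: abs_minus_commute\<close>)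
  also have "\<dots> = cc s"
  proof -
    have e1: "s powr (-\<beta>-1) = P / s" unfolding P_def using s0 by (simp add: powr_diff)
    have e2: "s powr (-2*\<beta>-1) = P * P / s" unfolding P_def using s0
      by (simp add: powr_diff powr_add[symmetric])
    show ?thesis unfolding cc_def e1 e2 using alg4[OF s0 U.L2m, where A=\<alpha>0 and a=a and k=BB and P=P and b="L2b*d"]
      by simp
  qed
  finally show ?thesis unfolding E_def E'_def .
qed

lemma F_diff: assumes t: "t \<ge> \<alpha>0"
  shows "\<bar>F2 a \<alpha>0 L N t - F2 a \<alpha>0 L' N' t\<bar> \<le> CC"
proof -
  have i1: "(\<lambda>s. E2 a \<alpha>0 L N s / (s * L s)) integrable_on {\<alpha>0..t}"
    by (rule integrable_on_subinterval[OF U.int_G]) auto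
  have i2: "(\<lambda>s. E2 a \<alpha>0 L' N' s / (s * L' s)) integrable_on {\<alpha>0..t}"
    by (rule integrable_on_subinterval[OF V.int_G]) auto
  have ic: "cc integrable_on {\<alpha>0..t}" by (rule integrable_on_subinterval[OF has_integral_integrable[OF has_int_c]]) auto
  have "\<bar>F2 a \<alpha>0 L N t - F2 a \<alpha>0 L' N' t\<bar> = \<bar>integral {\<alpha>0..t} (\<lambda>s. E2 a \<alpha>0 L N s / (s * L s) - E2 a \<alpha>0 L' N' s / (s * L' s))\<bar>"
    unfolding F2_def by (simp add: integral_diff[OF i1 i2])
  also have "\<dots> \<le> integral {\<alpha>0..t} cc"
    using integral_norm_bound_integral[OF integrable_diff[OF i1 i2] ic] G_diff by auto
  also have "\<dots> \<le> integral {\<alpha>0..} cc"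
    by (rule integral_subset_le[OF _ ic has_integral_integrable[OF has_int_c]]) (use cc_nonneg in auto)
  also have "\<dots> = CC" using has_int_c by (rule integral_unique)
  finally show ?thesis .
qed

lemma Finf_diff: "\<bar>F2inf a \<alpha>0 L N - F2inf a \<alpha>0 L' N'\<bar> \<le> CC"
proof -
  have i1: "(\<lambda>s. E2 a \<alpha>0 L N s / (s * L s)) integrable_on {\<alpha>0..}" by (rule U.int_G)
  have i2: "(\<lambda>s. E2 a \<alpha>0 L' N' s / (s * L' s)) integrable_on {\<alpha>0..}" by (rule V.int_G)
  have "\<bar>F2inf a \<alpha>0 L N - F2inf a \<alpha>0 L' N'\<bar> = \<bar>integral {\<alpha>0..} (\<lambda>s. E2 a \<alpha>0 L N s / (s * L s) - E2 a \<alpha>0 L' N' s / (s * L' s))\<bar>"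
    unfolding F2inf_def by (simp add: integral_diff[OF i1 i2])
  also have "\<dots> \<le> integral {\<alpha>0..} cc"
    using integral_norm_bound_integral[OF integrable_diff[OF i1 i2] has_integral_integrable[OF has_int_c]] G_diff by auto
  also have "\<dots> = CC" using has_int_c by (rule integral_unique)
  finally show ?thesis .
qed

lemma quot_diff:
  fixes A A' B B' :: real
  assumes "0 \<le> A" "A \<le> B" "0 \<le> A'" "A' \<le> B'" "B > 0" "B' > 0"
  shows "\<bar>A / B - A' / B'\<bar> \<le> (\<bar>A - A'\<bar> + \<bar>B - B'\<bar>) / B"
proof -
  have eq: "A / B - A' / B' = ((A - A') + (A' / B') * (B' - B)) / B" using assms by (simp add: field_simps)
  have q: "0 \<le> A' / B'" "A' / B' \<le> 1" using assms by auto
  have "\<bar>(A - A') + (A' / B') * (B' - B)\<bar> \<le> \<bar>A - A'\<bar> + (A' / B') * \<bar>B' - B\<bar>"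
    using q assms by (intro order_trans[OF abs_triangle_ineq]) (simp add: abs_mult)
  also have "\<dots> \<le> \<bar>A - A'\<bar> + 1 * \<bar>B - B'\<bar>"
    using q by (intro add_left_mono mult_mono) (auto simp: abs_minus_commute)
  finally have "\<bar>(A - A') + (A' / B') * (B' - B)\<bar> \<le> \<bar>A - A'\<bar> + \<bar>B - B'\<bar>" by simp
  thus ?thesis unfolding eq using assms by (simp add: abs_divide divide_right_mono)
qed

lemma W_diff0: assumes t: "t \<ge> \<alpha>0"
  shows "\<bar>(- F2 a \<alpha>0 L N t / F2inf a \<alpha>0 L N) - (- F2 a \<alpha>0 L' N' t / F2inf a \<alpha>0 L' N')\<bar> \<le> 2 * CC / U.LB"
proof -
  have "\<bar>(- F2 a \<alpha>0 L N t / F2inf a \<alpha>0 L N) - (- F2 a \<alpha>0 L' N' t / F2inf a \<alpha>0 L' N')\<bar>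
     = \<bar>F2 a \<alpha>0 L N t / F2inf a \<alpha>0 L N - F2 a \<alpha>0 L' N' t / F2inf a \<alpha>0 L' N'\<bar>" by simp
  also have "\<dots> \<le> (\<bar>F2 a \<alpha>0 L N t - F2 a \<alpha>0 L' N' t\<bar> + \<bar>F2inf a \<alpha>0 L N - F2inf a \<alpha>0 L' N'\<bar>) / F2inf a \<alpha>0 L N"
    by (rule quot_diff) (use U.F2_bounds[OF t] V.F2_bounds[OF t] U.F2inf_pos V.F2inf_pos in auto)
  also have "\<dots> \<le> (CC + CC) / F2inf a \<alpha>0 L N"
    using F_diff[OF t] Finf_diff U.F2inf_pos by (intro divide_right_mono add_mono) auto
  also have "\<dots> \<le> (CC + CC) / U.LB"
    using U.F2inf_lower U.LB_pos F_diff[OF t] by (intro divide_left_mono) (auto intro: order_trans[OF abs_ge_zero])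
  finally show ?thesis by simp
qed

lemma CC_eq: "CC = Fbar2 a \<beta> \<sigma> L2m N2M L2b N2b \<alpha>0 * d"
proof -
  define p where "p = \<alpha>0 powr \<beta>"
  define q where "q = \<alpha>0 powr \<sigma>"
  have al: "\<alpha>0 > 0" using U.al .
  have p: "p > 0" using al by (simp add: p_def)
  have pw: "\<alpha>0 powr (x + y) = \<alpha>0 powr x * \<alpha>0 powr y" "\<alpha>0 powr (x - y) = \<alpha>0 powr x / \<alpha>0 powr y"
     "\<alpha>0 powr (-x) = 1 / \<alpha>0 powr x" for x y
    by (simp_all add: powr_add powr_diff powr_minus_divide)
  have r1: "-(\<alpha>0 powr (-\<beta>+1))/(-\<beta>+1) = (\<alpha>0/p)/(\<beta>-1)"
  proof -
    have "\<alpha>0 powr (-\<beta>+1) = \<alpha>0/p" using pw(1)[of "-\<beta>" 1] pw(3)[of \<beta>] al by (simp add: p_def)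
    moreover have "-\<beta>+1 = -(\<beta>-1)" by simp
    ultimately show ?thesis by (simp only: divide_minus_right; simp)
  qed
  have r2: "-(\<alpha>0 powr (\<sigma>-2*\<beta>+1))/(\<sigma>-2*\<beta>+1) = (\<alpha>0*q/(p*p))/(2*\<beta>-\<sigma>-1)"
  proof -
    have "\<alpha>0 powr (\<sigma>-2*\<beta>+1) = \<alpha>0 powr (\<sigma> - \<beta> - \<beta> + 1)" by (simp add: algebra_simps)
    also have "\<dots> = \<alpha>0*q/(p*p)" unfolding pw p_def q_def using al by simp
    finally have "\<alpha>0 powr (\<sigma>-2*\<beta>+1) = \<alpha>0*q/(p*p)" .
    moreover have "\<sigma>-2*\<beta>+1 = -(2*\<beta>-\<sigma>-1)" by simp
    ultimately show ?thesis by (simp only: divide_minus_right; simp)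
  qed
  have r3: "-(\<alpha>0 powr (-\<beta>-1+1))/(-\<beta>-1+1) = (1/p)/\<beta>"
    by (simp add: pw p_def)
  have r4: "-(\<alpha>0 powr (-2*\<beta>-1+1))/(-2*\<beta>-1+1) = (1/(p*p))/(2*\<beta>)"
  proof -
    have e: "-2*\<beta>-1+1 = -(\<beta>+\<beta>)" by simp
    have v: "\<alpha>0 powr (-2*\<beta>-1+1) = 1/(p*p)" unfolding e pw p_def by simp
    show ?thesis unfolding v by simp
  qed
  have s1: "1 / \<alpha>0 powr (\<beta>-1) = \<alpha>0/p" unfolding pw p_def using al by simp
  have s2: "1 / \<alpha>0 powr (2*\<beta>-\<sigma>-1) = \<alpha>0*q/(p*p)"
  proof -
    have "\<alpha>0 powr (2*\<beta>-\<sigma>-1) = \<alpha>0 powr (\<beta> + \<beta> - \<sigma> - 1)" by (simp add: algebra_simps)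
    thus ?thesis unfolding pw p_def q_def using al by simp
  qed
  have s3: "1 / \<alpha>0 powr \<beta> = 1/p" by (simp add: p_def)
  have s4: "1 / \<alpha>0 powr (2*\<beta>) = 1/(p*p)"
  proof -
    have "\<alpha>0 powr (2*\<beta>) = \<alpha>0 powr (\<beta>+\<beta>)" by (simp add: algebra_simps)
    thus ?thesis unfolding pw p_def by simp
  qed
  have B: "\<beta>-1 > 0" "2*\<beta>-\<sigma>-1 > 0" "\<beta> > 0" using U.bs by auto
  show ?thesis unfolding CC_def BB_def Fbar2_def r1 r2 r3 r4 s1 s2 s3 s4
    by (rule alg5[OF al U.L2m p B])
qed

lemma phihat_eq: "2 * CC / U.LB = phihat a \<beta> \<sigma> L2m L2M N2M L2b N2b \<alpha>0 * d"
proof -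
  define p where "p = \<alpha>0 powr \<beta>"
  have al: "\<alpha>0 > 0" using U.al .
  have p: "p > 0" using al by (simp add: p_def)
  define E where "E = a*N2M/(L2m*(\<beta>-\<sigma>-1)) * (1/\<alpha>0 powr (\<beta>-\<sigma>-2))"
  have r3: "-(\<alpha>0 powr (-\<beta>-1+1))/(-\<beta>-1+1) = (1/p)/\<beta>"
    by (simp add: p_def powr_minus_divide)
  have f1: "\<alpha>0 * a * U.K1 = E"
  proof -
    have "\<alpha>0 * \<alpha>0 powr (\<sigma>-\<beta>+1) = \<alpha>0 powr (\<sigma>-\<beta>+1 + 1)" using al by (simp add: powr_add power2_eq_square)
    also have "\<dots> = 1/\<alpha>0 powr (\<beta>-\<sigma>-2)"
    proof -
      have e: "\<sigma>-\<beta>+1 + 1 = -(\<beta>-\<sigma>-2)" by simp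
      show ?thesis unfolding e by (rule powr_minus_divide)
    qed
    finally have h: "\<alpha>0 * \<alpha>0 powr (\<sigma>-\<beta>+1) = 1/\<alpha>0 powr (\<beta>-\<sigma>-2)" .
    have h2: "-(x)/(\<sigma>-\<beta>+1) = x/(\<beta>-\<sigma>-1)" for x
    proof -
      have e: "-(\<sigma>-\<beta>+1) = \<beta>-\<sigma>-1" by simp
      show ?thesis by (metis e minus_divide_right minus_divide_left)
    qed
    have "\<alpha>0 * a * U.K1 = a * N2M / L2m * (\<alpha>0 * \<alpha>0 powr (\<sigma>-\<beta>+1)) / (\<beta>-\<sigma>-1)"
      unfolding U.K1_def by (simp only: h2) (simp add: field_simps)
    thus ?thesis unfolding h E_def by simp
  qed
  have LB: "U.LB = exp (-E) / L2M * ((1/p)/\<beta>)" unfolding U.LB_def r3 f1 ..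
  show ?thesis unfolding LB CC_eq phihat_def E_def[symmetric] p_def[symmetric]
    using p U.L2M U.bs by (simp add: exp_minus field_simps)
qed

end

lemma supn_le_dist:
  fixes h g :: "real \<Rightarrow>\<^sub>C real"
  assumes "S \<noteq> {}"
  shows "supn S (\<lambda>y. h (c y) - g (c y)) \<le> dist h g"
  unfolding supn_def
proof (rule cSUP_least[OF assms])
  fix y show "\<bar>h (c y) - g (c y)\<bar> \<le> dist h g" using dist_bounded[of h "c y" g] by (simp add: dist_real_def)
qed

lemma fix_C:
  fixes T :: "(real \<Rightarrow> real) \<Rightarrow> (real \<Rightarrow> real)"
  assumes al: "\<alpha>0 > 0" and k: "0 \<le> k" "k < 1"
    and Tinto: "\<And>f. inC \<alpha>0 f \<Longrightarrow> inC \<alpha>0 (T f)"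
    and Tlip: "\<And>f g \<eta>. inC \<alpha>0 f \<Longrightarrow> inC \<alpha>0 g \<Longrightarrow> \<eta> \<in> {0..\<alpha>0} \<Longrightarrow>
        \<bar>T f \<eta> - T g \<eta>\<bar> \<le> k * supn {0..\<alpha>0} (\<lambda>x. f x - g x)"
  shows "\<exists>f. inC \<alpha>0 f \<and> (\<forall>\<eta>\<in>{0..\<alpha>0}. f \<eta> = T f \<eta>)"
proof -
  define cl where "cl x = max 0 (min \<alpha>0 x)" for x :: real
  have ccl: "continuous_on UNIV cl" unfolding cl_def[abs_def] by (intro continuous_intros)
  have clr: "cl x \<in> {0..\<alpha>0}" for x using al by (auto simp: cl_def)
  have clid: "x \<in> {0..\<alpha>0} \<Longrightarrow> cl x = x" for x by (auto simp: cl_def)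
  have hcl: "inC \<alpha>0 (\<lambda>y. apply_bcontfun h (cl y))" for h
    unfolding inC_def
    by (rule continuous_on_compose2[OF continuous_on_apply_bcontfun continuous_on_subset[OF ccl]]) auto
  define Tb where "Tb h = (\<lambda>x. T (\<lambda>y. apply_bcontfun h (cl y)) (cl x))" for h
  have mem: "Tb h \<in> bcontfun" for h
  proof -
    have c: "continuous_on {0..\<alpha>0} (T (\<lambda>y. apply_bcontfun h (cl y)))" using Tinto[OF hcl] unfolding inC_def .
    have "continuous_on UNIV (Tb h)" unfolding Tb_def
      by (rule continuous_on_compose2[OF c ccl]) (use clr in auto)
    moreover have "bounded (range (Tb h))"
    proof (rule bounded_subset)
      show "bounded (T (\<lambda>y. apply_bcontfun h (cl y)) ` {0..\<alpha>0})"
        by (rule compact_imp_bounded, rule compact_continuous_image[OF c]) simp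
      show "range (Tb h) \<subseteq> T (\<lambda>y. apply_bcontfun h (cl y)) ` {0..\<alpha>0}"
        unfolding Tb_def using clr by auto
    qed
    ultimately show ?thesis unfolding bcontfun_def by auto
  qed
  define T1 where "T1 h = Bcontfun (Tb h)" for h
  have T1a: "apply_bcontfun (T1 h) = Tb h" for h unfolding T1_def using mem Bcontfun_inverse by blast
  have "\<exists>!h\<in>UNIV. T1 h = h"
  proof (rule Banach_fix[OF complete_UNIV UNIV_not_empty k])
    show "T1 ` UNIV \<subseteq> UNIV" by simp
    fix h g :: "real \<Rightarrow>\<^sub>C real"
    show "dist (T1 h) (T1 g) \<le> k * dist h g"
    proof (rule dist_bound)
      fix x
      have "dist (T1 h x) (T1 g x) = \<bar>Tb h x - Tb g x\<bar>" by (simp add: T1a dist_real_def)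
      also have "\<dots> \<le> k * supn {0..\<alpha>0} (\<lambda>y. apply_bcontfun h (cl y) - apply_bcontfun g (cl y))"
        unfolding Tb_def by (rule Tlip[OF hcl hcl clr])
      also have "\<dots> \<le> k * dist h g"
        using supn_le_dist[of "{0..\<alpha>0}" h cl g] al k by (intro mult_left_mono) auto
      finally show "dist (T1 h x) (T1 g x) \<le> k * dist h g" .
    qed
  qed
  then obtain h where h: "T1 h = h" by auto
  show ?thesis
  proof (intro exI conjI ballI)
    show "inC \<alpha>0 (\<lambda>y. apply_bcontfun h (cl y))" by (rule hcl)
    fix \<eta> assume e: "\<eta> \<in> {0..\<alpha>0}"
    have "apply_bcontfun h (cl \<eta>) = apply_bcontfun (T1 h) \<eta>" using h clid[OF e] by simp
    also have "\<dots> = T (\<lambda>y. apply_bcontfun h (cl y)) \<eta>" unfolding T1a Tb_def using clid[OF e] by simp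
    finally show "apply_bcontfun h (cl \<eta>) = T (\<lambda>y. apply_bcontfun h (cl y)) \<eta>" .
  qed
qed

lemma pointwise_lim:
  fixes x :: "nat \<Rightarrow> real \<Rightarrow>\<^sub>C real"
  assumes "x \<longlonglongrightarrow> l"
  shows "(\<lambda>n. apply_bcontfun (x n) t) \<longlonglongrightarrow> apply_bcontfun l t"
  using assms unfolding tendsto_iff
  by (auto elim!: eventually_mono intro: dist_fun_lt_imp_dist_val_lt)

lemma closed_M: "closed {h :: real \<Rightarrow>\<^sub>C real. inM \<alpha>0 (apply_bcontfun h)}"
proof (rule closed_sequential_limits[THEN iffD2], intro allI impI, elim conjE)
  fix x :: "nat \<Rightarrow> real \<Rightarrow>\<^sub>C real" and l
  assume xs: "\<forall>n. x n \<in> {h. inM \<alpha>0 (apply_bcontfun h)}" and lim: "x \<longlonglongrightarrow> l"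
  have xm: "inM \<alpha>0 (apply_bcontfun (x n))" for n using xs by auto
  have "l \<alpha>0 = 0"
  proof -
    have "(\<lambda>n. apply_bcontfun (x n) \<alpha>0) \<longlonglongrightarrow> apply_bcontfun l \<alpha>0" by (rule pointwise_lim[OF lim])
    moreover have "(\<lambda>n. apply_bcontfun (x n) \<alpha>0) = (\<lambda>n. 0)" using xm by (simp add: inM_def)
    ultimately show ?thesis using LIMSEQ_unique by (metis tendsto_const)
  qed
  moreover have "(apply_bcontfun l \<longlongrightarrow> -1) at_top"
    unfolding tendsto_iff
  proof (intro allI impI)
    fix e :: real assume e: "e > 0"
    obtain N where N: "dist (x N) l < e/2"
      using lim e unfolding tendsto_iff eventually_sequentially by (metis half_gt_zero order_refl)
    have "eventually (\<lambda>t. dist (apply_bcontfun (x N) t) (-1) < e/2) at_top"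
      using xm[of N] e unfolding inM_def tendsto_iff by (meson half_gt_zero)
    thus "eventually (\<lambda>t. dist (apply_bcontfun l t) (-1) < e) at_top"
    proof eventually_elim
      case (elim t)
      have "dist (apply_bcontfun l t) (-1) \<le> dist (apply_bcontfun l t) (apply_bcontfun (x N) t) + dist (apply_bcontfun (x N) t) (-1)"
        by (rule dist_triangle)
      also have "\<dots> < e/2 + e/2"
        using dist_fun_lt_imp_dist_val_lt[OF N, of t] elim by (simp add: dist_commute)
      finally show ?case by simp
    qed
  qed
  ultimately show "l \<in> {h. inM \<alpha>0 (apply_bcontfun h)}"
    unfolding inM_def by (auto intro: bounded_subset[OF bounded_apply_bcontfun])
qed

lemma fix_M:
  fixes T :: "(real \<Rightarrow> real) \<Rightarrow> (real \<Rightarrow> real)"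
  assumes al: "\<alpha>0 > 0" and k: "0 \<le> k" "k < 1"
    and Tinto: "\<And>f. inM \<alpha>0 f \<Longrightarrow> inM \<alpha>0 (T f)"
    and Tlip: "\<And>f g \<xi>. inM \<alpha>0 f \<Longrightarrow> inM \<alpha>0 g \<Longrightarrow> \<xi> \<in> {\<alpha>0..} \<Longrightarrow>
        \<bar>T f \<xi> - T g \<xi>\<bar> \<le> k * supn {\<alpha>0..} (\<lambda>x. f x - g x)"
  shows "\<exists>f. inM \<alpha>0 f \<and> (\<forall>\<xi>\<in>{\<alpha>0..}. f \<xi> = T f \<xi>)"
proof -
  define S where "S = {h :: real \<Rightarrow>\<^sub>C real. inM \<alpha>0 (apply_bcontfun h)}"
  define Tb where "Tb h = (\<lambda>x. T (apply_bcontfun h) (max \<alpha>0 x))" for h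
  have cm: "continuous_on UNIV (max \<alpha>0)" by (intro continuous_intros)
  have mem: "Tb h \<in> bcontfun" if "h \<in> S" for h
  proof -
    have m: "inM \<alpha>0 (T (apply_bcontfun h))" using Tinto that unfolding S_def by auto
    hence c: "continuous_on {\<alpha>0..} (T (apply_bcontfun h))" by (simp add: inM_def)
    have "continuous_on UNIV (Tb h)" unfolding Tb_def
      by (rule continuous_on_compose2[OF c cm]) auto
    moreover have "bounded (range (Tb h))"
      by (rule bounded_subset[of "T (apply_bcontfun h) ` {\<alpha>0..}"]) (use m in \<open>auto simp: inM_def Tb_def\<close>)
    ultimately show ?thesis unfolding bcontfun_def by auto
  qed
  define T1 where "T1 h = Bcontfun (Tb h)" for h
  have T1a: "h \<in> S \<Longrightarrow> apply_bcontfun (T1 h) = Tb h" for h unfolding T1_def using mem Bcontfun_inverse by blast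
  have "\<exists>!h\<in>S. T1 h = h"
  proof (rule Banach_fix[OF _ _ k])
    show "complete S" unfolding S_def using closed_M complete_eq_closed by blast
    define h0 where "h0 = (\<lambda>x::real. - min 1 (max 0 (x - \<alpha>0)))"
    have h0b: "h0 \<in> bcontfun" unfolding h0_def by (rule bcontfun_normI[where b=1]) (auto intro!: continuous_intros)
    have "inM \<alpha>0 h0" unfolding inM_def
    proof (intro conjI)
      show "continuous_on {\<alpha>0..} h0" unfolding h0_def by (intro continuous_intros)
      show "bounded (h0 ` {\<alpha>0..})" unfolding bounded_iff h0_def by (intro exI[of _ 1]) auto
      show "h0 \<alpha>0 = 0" by (simp add: h0_def)
      show "(h0 \<longlongrightarrow> -1) at_top"
        by (rule tendsto_eventually, rule eventually_mono[OF eventually_ge_at_top[of "\<alpha>0+1"]]) (auto simp: h0_def)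
    qed
    moreover have "apply_bcontfun (Bcontfun h0) = h0" using h0b Bcontfun_inverse by blast
    ultimately have "Bcontfun h0 \<in> S" unfolding S_def by simp
    thus "S \<noteq> {}" by auto
    show "T1 ` S \<subseteq> S"
    proof
      fix y assume "y \<in> T1 ` S"
      then obtain h where h: "h \<in> S" "y = T1 h" by auto
      have m: "inM \<alpha>0 (T (apply_bcontfun h))" using Tinto h unfolding S_def by auto
      have "inM \<alpha>0 (Tb h)" unfolding inM_def
      proof (intro conjI)
        show "continuous_on {\<alpha>0..} (Tb h)" using mem[OF h(1)] unfolding bcontfun_def
          by (auto intro: continuous_on_subset)
        show "bounded (Tb h ` {\<alpha>0..})" using mem[OF h(1)] unfolding bcontfun_def
          by (auto intro: bounded_subset)
        show "Tb h \<alpha>0 = 0" using m by (simp add: Tb_def inM_def)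
        have "eventually (\<lambda>x. T (apply_bcontfun h) x = Tb h x) at_top"
          by (rule eventually_mono[OF eventually_ge_at_top[of \<alpha>0]]) (auto simp: Tb_def)
        thus "(Tb h \<longlongrightarrow> -1) at_top" using m tendsto_cong unfolding inM_def by blast
      qed
      thus "y \<in> S" using T1a[OF h(1)] unfolding S_def h(2) by simp
    qed
    fix h g assume hg: "h \<in> S" "g \<in> S"
    show "dist (T1 h) (T1 g) \<le> k * dist h g"
    proof (rule dist_bound)
      fix x
      have "dist (T1 h x) (T1 g x) = \<bar>Tb h x - Tb g x\<bar>" by (simp add: T1a hg dist_real_def)
      also have "\<dots> \<le> k * supn {\<alpha>0..} (\<lambda>y. apply_bcontfun h (id y) - apply_bcontfun g (id y))"
        unfolding Tb_def id_def by (rule Tlip) (use hg in \<open>auto simp: S_def\<close>)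
      also have "\<dots> \<le> k * dist h g"
        using supn_le_dist[of "{\<alpha>0..}" h id g] k by (intro mult_left_mono) auto
      finally show "dist (T1 h x) (T1 g x) \<le> k * dist h g" .
    qed
  qed
  then obtain h where h: "h \<in> S" "T1 h = h" by auto
  show ?thesis
  proof (intro exI conjI ballI)
    show "inM \<alpha>0 (apply_bcontfun h)" using h S_def by auto
    fix \<xi> assume e: "\<xi> \<in> {\<alpha>0..}"
    have "apply_bcontfun h \<xi> = apply_bcontfun (T1 h) \<xi>" using h by simp
    also have "\<dots> = T (apply_bcontfun h) \<xi>" unfolding T1a[OF h(1)] Tb_def using e by simp
    finally show "apply_bcontfun h \<xi> = T (apply_bcontfun h) \<xi>" .
  qed
qed

lemma pw_to0: "p > 0 \<Longrightarrow> ((\<lambda>x::real. x powr p) \<longlongrightarrow> 0) (at_right 0)"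
  by (rule tendsto_zero_powrI[OF tendsto_ident_at tendsto_const eventually_mono[OF eventually_at_right_less]]) auto

lemma pw_top: assumes "p > 0" shows "filterlim (\<lambda>x::real. x powr p) at_top at_top"
proof -
  have h: "filterlim (\<lambda>x::real. inverse (x powr (-p))) at_top at_top"
    by (rule filterlim_inverse_at_top[OF tendsto_neg_powr[OF _ filterlim_ident] eventually_mono[OF eventually_gt_at_top[of 0]]])
       (use assms in auto)
  have ev: "eventually (\<lambda>x::real. inverse (x powr (-p)) = x powr p) at_top"
    by (rule eventually_mono[OF eventually_gt_at_top[of 0]]) (simp add: powr_minus)
  show ?thesis by (rule filterlim_cong[OF refl refl ev, THEN iffD1, OF h])
qed

lemma pw_inf0: assumes "e < 0" shows "filterlim (\<lambda>x::real. x powr e) at_top (at_right 0)"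
proof -
  have h: "filterlim (\<lambda>x::real. inverse (x powr (-e))) at_top (at_right 0)"
    by (rule filterlim_inverse_at_top[OF pw_to0 eventually_mono[OF eventually_at_right_less]]) (use assms in auto)
  have ev: "eventually (\<lambda>x::real. inverse (x powr (-e)) = x powr e) (at_right 0)"
    by (rule eventually_mono[OF eventually_at_right_less]) (simp add: powr_minus)
  show ?thesis by (rule filterlim_cong[OF refl refl ev, THEN iffD1, OF h])
qed

lemma cpw_top: "A > 0 \<Longrightarrow> p > 0 \<Longrightarrow> filterlim (\<lambda>x::real. A * x powr p) at_top at_top"
  by (rule filterlim_tendsto_pos_mult_at_top[OF tendsto_const _ pw_top])

lemma cpw_inf0: "A > 0 \<Longrightarrow> e < 0 \<Longrightarrow> filterlim (\<lambda>x::real. A * x powr e) at_top (at_right 0)"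
  by (rule filterlim_tendsto_pos_mult_at_top[OF tendsto_const _ pw_inf0])


locale psum =
  fixes A1 A2 A3 p1 p2 p3 :: real
  assumes A: "A1 \<ge> 0" "A2 \<ge> 0" "A3 \<ge> 0" "A1 + A2 + A3 > 0"
begin
definition "S z = A1 * z powr p1 + A2 * z powr p2 + A3 * z powr p3"

lemma tnn: "z > 0 \<Longrightarrow> A1 * z powr p1 \<ge> 0" "z > 0 \<Longrightarrow> A2 * z powr p2 \<ge> 0" "z > 0 \<Longrightarrow> A3 * z powr p3 \<ge> 0"
  using A by auto

lemma S_ge: assumes "z > 0" shows "S z \<ge> A1 * z powr p1" "S z \<ge> A2 * z powr p2" "S z \<ge> A3 * z powr p3"
  unfolding S_def using tnn[OF assms] by linarith+

lemma S_pos: assumes z: "z > 0" shows "S z > 0"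
proof -
  have "A1 > 0 \<or> A2 > 0 \<or> A3 > 0" using A by linarith
  moreover have "A1 > 0 \<Longrightarrow> A1 * z powr p1 > 0" "A2 > 0 \<Longrightarrow> A2 * z powr p2 > 0" "A3 > 0 \<Longrightarrow> A3 * z powr p3 > 0"
    using z by auto
  ultimately show ?thesis using S_ge[OF z] by linarith
qed

end

locale psum_pos = psum +
  assumes p: "p1 > 0" "p2 > 0" "p3 > 0"
begin

lemma S_mono: assumes "0 < x" "x < y" shows "S x < S y"
proof -
  have m: "A * x powr p \<le> A * y powr p" "A > 0 \<Longrightarrow> A * x powr p < A * y powr p" if "A \<ge> 0" "p > 0" for A p
  proof -
    have "x powr p < y powr p" using that assms by (intro powr_less_mono2) auto
    thus "A * x powr p \<le> A * y powr p" "A > 0 \<Longrightarrow> A * x powr p < A * y powr p"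
      using that by (auto intro: mult_left_mono)
  qed
  show ?thesis unfolding S_def using m[OF A(1) p(1)] m[OF A(2) p(2)] m[OF A(3) p(3)] A by linarith
qed

lemma S_to0: "(S \<longlongrightarrow> 0) (at_right 0)"
proof -
  have "((\<lambda>z. A1 * z powr p1 + A2 * z powr p2 + A3 * z powr p3) \<longlongrightarrow> A1 * 0 + A2 * 0 + A3 * 0) (at_right 0)"
    by (intro tendsto_add tendsto_mult tendsto_const pw_to0 p)
  thus ?thesis unfolding S_def[abs_def] by simp
qed

lemma S_top: "filterlim S at_top at_top"
proof -
  show ?thesis
  proof (cases "A1 > 0")
    case True thus ?thesis
      by (rule filterlim_at_top_mono[OF cpw_top[OF _ p(1)]]) (rule eventually_mono[OF eventually_gt_at_top[of 0]], rule S_ge)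
  next
    case f1: False
    show ?thesis
    proof (cases "A2 > 0")
      case True thus ?thesis
        by (rule filterlim_at_top_mono[OF cpw_top[OF _ p(2)]]) (rule eventually_mono[OF eventually_gt_at_top[of 0]], rule S_ge)
    next
      case False
      hence "A3 > 0" using f1 A by linarith
      thus ?thesis
        by (rule filterlim_at_top_mono[OF cpw_top[OF _ p(3)]]) (rule eventually_mono[OF eventually_gt_at_top[of 0]], rule S_ge)
    qed
  qed
qed

end

locale psum_neg = psum +
  assumes e: "p1 < 0" "p2 < 0" "p3 < 0"
begin

lemma S_mono: assumes "0 < x" "x < y" shows "S y < S x"
proof -
  have m: "A * y powr p \<le> A * x powr p" "A > 0 \<Longrightarrow> A * y powr p < A * x powr p" if "A \<ge> 0" "p < 0" for A p
  proof -
    have "y powr p < x powr p" using that assms by (intro powr_less_mono2_neg) auto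
    thus "A * y powr p \<le> A * x powr p" "A > 0 \<Longrightarrow> A * y powr p < A * x powr p"
      using that by (auto intro: mult_left_mono)
  qed
  show ?thesis unfolding S_def using m[OF A(1) e(1)] m[OF A(2) e(2)] m[OF A(3) e(3)] A by linarith
qed

lemma S_to0: "(S \<longlongrightarrow> 0) at_top"
proof -
  have "((\<lambda>z. A1 * z powr p1 + A2 * z powr p2 + A3 * z powr p3) \<longlongrightarrow> A1 * 0 + A2 * 0 + A3 * 0) at_top"
    by (intro tendsto_add tendsto_mult tendsto_const tendsto_neg_powr filterlim_ident e)
  thus ?thesis unfolding S_def[abs_def] by simp
qed

lemma S_inf0: "filterlim S at_top (at_right 0)"
proof (cases "A1 > 0")
  case True thus ?thesis
    by (rule filterlim_at_top_mono[OF cpw_inf0[OF _ e(1)]]) (rule eventually_mono[OF eventually_at_right_less], rule S_ge)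
next
  case f1: False
  show ?thesis
  proof (cases "A2 > 0")
    case True thus ?thesis
      by (rule filterlim_at_top_mono[OF cpw_inf0[OF _ e(2)]]) (rule eventually_mono[OF eventually_at_right_less], rule S_ge)
  next
    case False
    hence "A3 > 0" using f1 A by linarith
    thus ?thesis
      by (rule filterlim_at_top_mono[OF cpw_inf0[OF _ e(3)]]) (rule eventually_mono[OF eventually_at_right_less], rule S_ge)
  qed
qed

end

lemma alg6:
  fixes z a L N X B M Y K1 K2 K3 Z :: real
  shows "z*a/L^2 * (N*X/K1 + B*M/L*Y/K2) + B/L^2*Z/K3
    = a/L^2*(N/K1)*(z*X) + a/L^2*(B*M/L/K2)*(z*Y) + B/L^2/K3*Z"
  by (simp add: divide_inverse algebra_simps)

lemma Fbar1_form:
  assumes z: "z > 0"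
  shows "Fbar1 a \<mu> \<nu> L1m N1M L1b N1b z =
    (a/L1m^2*(N1b/((\<mu>+1)*(2*\<mu>+1)))) * z powr (2*\<mu>+1+1)
  + (a/L1m^2*(L1b*N1M/L1m/((2*\<mu>-\<nu>+1)*(3*\<mu>-\<nu>+1)))) * z powr (3*\<mu>-\<nu>+1+1)
  + (L1b/L1m^2/(2*\<mu>)) * z powr (2*\<mu>)"
proof -
  have e: "z powr (x+1) = z * z powr x" for x using z by (simp add: powr_add)
  show ?thesis unfolding Fbar1_def e alg6 ..
qed

lemma phi_props:
  fixes D a \<mu> \<nu> L1m N1M L1b N1b :: real
  assumes "a > 0" "D > 0" "\<mu> > 1" "\<nu> > 0" "\<nu> < \<mu>" "L1m > 0" "N1M > 0" "L1b \<ge> 0" "N1b \<ge> 0" "L1b + N1b > 0"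
  defines "\<phi> \<equiv> phi D a \<mu> \<nu> L1m N1M L1b N1b"
  shows "(\<forall>z>0. \<phi> z > 0) \<and> (\<forall>x>0. \<forall>y>x. \<phi> x < \<phi> y) \<and> (\<phi> \<longlongrightarrow> 0) (at_right 0) \<and> filterlim \<phi> at_top at_top"
proof -
  define A1 where "A1 = a/L1m^2*(N1b/((\<mu>+1)*(2*\<mu>+1)))"
  define A2 where "A2 = a/L1m^2*(L1b*N1M/L1m/((2*\<mu>-\<nu>+1)*(3*\<mu>-\<nu>+1)))"
  define A3 where "A3 = L1b/L1m^2/(2*\<mu>)"
  have A: "A1 \<ge> 0" "A2 \<ge> 0" "A3 \<ge> 0" unfolding A1_def A2_def A3_def using assms by auto
  have "A1 + A2 + A3 > 0"
  proof (cases "L1b > 0")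
    case True hence "A3 > 0" unfolding A3_def using assms by auto
    thus ?thesis using A by linarith
  next
    case False hence "N1b > 0" using assms by auto
    hence "A1 > 0" unfolding A1_def using assms by auto
    thus ?thesis using A by linarith
  qed
  interpret P: psum_pos A1 A2 A3 "2*\<mu>+1+1" "3*\<mu>-\<nu>+1+1" "2*\<mu>"
    by unfold_locales (use A \<open>A1 + A2 + A3 > 0\<close> assms in auto)
  have eq: "z > 0 \<Longrightarrow> \<phi> z = (2*D) * P.S z" for z
  proof -
    assume z: "z > 0"
    show ?thesis unfolding \<phi>_def phi_def P.S_def unfolding A1_def A2_def A3_def Fbar1_form[OF z] by simp
  qed
  have ev0: "eventually (\<lambda>z. (2*D) * P.S z = \<phi> z) (at_right 0)"
    by (rule eventually_mono[OF eventually_at_right_less]) (simp add: eq)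
  have evt: "eventually (\<lambda>z. (2*D) * P.S z = \<phi> z) at_top"
    by (rule eventually_mono[OF eventually_gt_at_top[of 0]]) (simp add: eq)
  show ?thesis
  proof (intro conjI allI impI)
    show "\<phi> z > 0" if "z > 0" for z using eq[OF that] P.S_pos[OF that] assms by simp
    show "\<phi> x < \<phi> y" if "x > 0" "y > x" for x y using eq[OF that(1)] eq[of y] that P.S_mono[OF that] assms by simp
    have "((\<lambda>z. (2*D) * P.S z) \<longlongrightarrow> (2*D) * 0) (at_right 0)" by (intro tendsto_mult tendsto_const P.S_to0)
    thus "(\<phi> \<longlongrightarrow> 0) (at_right 0)" using tendsto_cong[OF ev0] by simp
    have "filterlim (\<lambda>z. (2*D) * P.S z) at_top at_top"
      by (rule filterlim_tendsto_pos_mult_at_top[OF tendsto_const _ P.S_top]) (use assms in simp)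
    thus "filterlim \<phi> at_top at_top" by (rule filterlim_cong[OF refl refl evt, THEN iffD1])
  qed
qed

lemma alg7:
  fixes L2M \<beta> p z a L N b1 K B q E :: real
  assumes "p > 0" "\<beta> > 0" "L > 0"
  shows "2*L2M*\<beta>*p*(z*a/(\<beta>*L^2)*(N/b1*(z/p) + K*(z*q/(p*p)))*(1/p) + B/(2*\<beta>*L^2)*(1/(p*p))) * E
    = (2*L2M*\<beta>) * ((a/(\<beta>*L^2)*(N/b1)) * (z*z/p) + (a/(\<beta>*L^2)*K) * (z*z*q/(p*p)) + (B/(2*\<beta>*L^2)) * (1/p)) * E"
  using assms by (simp add: field_simps power2_eq_square)

lemma phihat_form:
  assumes z: "z > 0" and that: "\<beta> > 0" "L2m > 0"
  shows "phihat a \<beta> \<sigma> L2m L2M N2M L2b N2b z =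
    (2*L2M*\<beta>) * ((a/(\<beta>*L2m^2)*(N2b/(\<beta>-1))) * z powr (2-\<beta>)
       + (a/(\<beta>*L2m^2)*(L2b * N2M / (L2m * (2*\<beta>-\<sigma>-1)))) * z powr (\<sigma>+2-2*\<beta>)
       + (L2b/(2*\<beta>*L2m^2)) * z powr (-\<beta>))
    * exp (a * N2M / (L2m * (\<beta>-\<sigma>-1)) * z powr (\<sigma>+2-\<beta>))"
proof -
  define p where "p = z powr \<beta>"
  define q where "q = z powr \<sigma>"
  have p: "p > 0" using z by (simp add: p_def)
  have pw: "z powr (x + y) = z powr x * z powr y" "z powr (x - y) = z powr x / z powr y" for x y
    by (simp_all add: powr_add powr_diff)
  have U1: "1 / z powr (\<beta>-1) = z/p" unfolding pw p_def using z by simp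
  have P2: "z powr (2*\<beta>) = p*p" unfolding p_def by (simp add: powr_add[symmetric])
  have U2: "1 / z powr (2*\<beta>-\<sigma>-1) = z*q/(p*p)"
    unfolding pw P2 q_def using z p by simp
  have U3: "1 / z powr \<beta> = 1/p" by (simp add: p_def)
  have U4: "1 / z powr (2*\<beta>) = 1/(p*p)" by (simp add: P2)
  have V: "1 / z powr (\<beta>-\<sigma>-2) = z powr (\<sigma>+2-\<beta>)"
  proof -
    have e: "\<sigma>+2-\<beta> = -(\<beta>-\<sigma>-2)" by simp
    show ?thesis unfolding e by (rule powr_minus_divide[symmetric])
  qed
  have W1: "z powr (2-\<beta>) = z*z/p" unfolding pw p_def using z by (simp add: power2_eq_square)
  have W2: "z powr (\<sigma>+2-2*\<beta>) = z*z*q/(p*p)"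
    unfolding pw P2 q_def using z p by (simp add: power2_eq_square)
  have W3: "z powr (-\<beta>) = 1/p" by (simp add: p_def powr_minus_divide)
  show ?thesis unfolding phihat_def Fbar2_def U1 U2 U3 U4 V W1 W2 W3 p_def[symmetric]
    by (rule alg7[OF p that])
qed

lemma phihat_props:
  fixes a \<beta> \<sigma> L2m L2M N2M L2b N2b :: real
  assumes "a > 0" "\<sigma> > 0" "\<beta> > \<sigma> + 2" "L2m > 0" "L2M > 0" "N2M > 0" "L2b \<ge> 0" "N2b \<ge> 0" "L2b + N2b > 0"
  defines "\<phi>h \<equiv> phihat a \<beta> \<sigma> L2m L2M N2M L2b N2b"
  shows "(\<forall>z>0. \<phi>h z > 0) \<and> (\<forall>x>0. \<forall>y>x. \<phi>h y < \<phi>h x) \<and> filterlim \<phi>h at_top (at_right 0) \<and> (\<phi>h \<longlongrightarrow> 0) at_top"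
proof -
  define B1 where "B1 = a/(\<beta>*L2m^2)*(N2b/(\<beta>-1))"
  define B2 where "B2 = a/(\<beta>*L2m^2)*(L2b * N2M / (L2m * (2*\<beta>-\<sigma>-1)))"
  define B3 where "B3 = L2b/(2*\<beta>*L2m^2)"
  define C where "C = a * N2M / (L2m * (\<beta>-\<sigma>-1))"
  define K where "K = 2*L2M*\<beta>"
  define X where "X z = exp (C * z powr (\<sigma>+2-\<beta>))" for z :: real
  have B: "B1 \<ge> 0" "B2 \<ge> 0" "B3 \<ge> 0" unfolding B1_def B2_def B3_def using assms by auto
  have C: "C > 0" unfolding C_def using assms by auto
  have K: "K > 0" unfolding K_def using assms by auto
  have "B1 + B2 + B3 > 0"
  proof (cases "L2b > 0")
    case True hence "B3 > 0" unfolding B3_def using assms by auto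
    thus ?thesis using B by linarith
  next
    case False hence "N2b > 0" using assms by auto
    hence "B1 > 0" unfolding B1_def using assms by auto
    thus ?thesis using B by linarith
  qed
  interpret P: psum_neg B1 B2 B3 "2-\<beta>" "\<sigma>+2-2*\<beta>" "-\<beta>"
    by unfold_locales (use B \<open>B1 + B2 + B3 > 0\<close> assms in auto)
  have eq: "z > 0 \<Longrightarrow> \<phi>h z = K * P.S z * X z" for z
  proof -
    assume z: "z > 0"
    show ?thesis unfolding \<phi>h_def P.S_def X_def unfolding B1_def B2_def B3_def C_def K_def
      by (rule phihat_form[OF z]) (use assms in auto)
  qed
  have X1: "z > 0 \<Longrightarrow> X z \<ge> 1" for z unfolding X_def using C by auto
  have Xm: "0 < x \<Longrightarrow> x \<le> y \<Longrightarrow> X y \<le> X x" for x y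
    unfolding X_def using C assms by (auto intro!: mult_left_mono powr_mono2')
  have ev0: "eventually (\<lambda>z. K * P.S z * X z = \<phi>h z) (at_right 0)"
    by (rule eventually_mono[OF eventually_at_right_less]) (simp add: eq)
  have evt: "eventually (\<lambda>z. K * P.S z * X z = \<phi>h z) at_top"
    by (rule eventually_mono[OF eventually_gt_at_top[of 0]]) (simp add: eq)
  show ?thesis
  proof (intro conjI allI impI)
    show "\<phi>h z > 0" if "z > 0" for z using eq[OF that] P.S_pos[OF that] K X1[OF that] by simp
    show "\<phi>h y < \<phi>h x" if "x > 0" "y > x" for x y
    proof -
      have y: "y > 0" using that by auto
      have "K * P.S y * X y \<le> K * P.S y * X x"
        using Xm[of x y] that K P.S_pos[OF y] by (intro mult_left_mono) auto
      also have "\<dots> < K * P.S x * X x"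
        using P.S_mono[OF that] K X1[OF that(1)] by (intro mult_strict_right_mono) auto
      finally show ?thesis using eq[OF that(1)] eq[OF y] by simp
    qed
    have "filterlim (\<lambda>z. K * P.S z) at_top (at_right 0)"
      by (rule filterlim_tendsto_pos_mult_at_top[OF tendsto_const K P.S_inf0])
    moreover have "eventually (\<lambda>z. K * P.S z \<le> \<phi>h z) (at_right 0)"
    proof (rule eventually_mono[OF eventually_at_right_less])
      fix z :: real assume z: "0 < z"
      have "K * P.S z * 1 \<le> K * P.S z * X z" using K P.S_pos[OF z] X1[OF z] by (intro mult_left_mono) auto
      thus "K * P.S z \<le> \<phi>h z" using eq[OF z] by simp
    qed
    ultimately show "filterlim \<phi>h at_top (at_right 0)" by (rule filterlim_at_top_mono)
    have "((\<lambda>z. K * P.S z * X z) \<longlongrightarrow> K * 0 * exp (C * 0)) at_top"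
      unfolding X_def using assms
      by (intro tendsto_mult tendsto_const P.S_to0 tendsto_exp tendsto_neg_powr filterlim_ident) auto
    thus "(\<phi>h \<longlongrightarrow> 0) at_top" using tendsto_cong[OF evt] by simp
  qed
qed

lemma supn_C:
  assumes "inC \<alpha>0 f" "inC \<alpha>0 g" "x \<in> {0..\<alpha>0}"
  shows "\<bar>f x - g x\<bar> \<le> supn {0..\<alpha>0} (\<lambda>x. f x - g x)"
  unfolding supn_def
proof (rule cSUP_upper[OF assms(3)])
  have "continuous_on {0..\<alpha>0} (\<lambda>x. \<bar>f x - g x\<bar>)" using assms unfolding inC_def by (intro continuous_intros)
  hence "compact ((\<lambda>x. \<bar>f x - g x\<bar>) ` {0..\<alpha>0})" by (rule compact_continuous_image) simp
  thus "bdd_above ((\<lambda>x. \<bar>f x - g x\<bar>) ` {0..\<alpha>0})" by (intro bounded_imp_bdd_above compact_imp_bounded)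
qed

lemma supn_M:
  assumes "inM \<alpha>0 f" "inM \<alpha>0 g" "x \<in> {\<alpha>0..}"
  shows "\<bar>f x - g x\<bar> \<le> supn {\<alpha>0..} (\<lambda>x. f x - g x)"
  unfolding supn_def
proof (rule cSUP_upper[OF assms(3)])
  obtain Bf where Bf: "\<forall>y\<in>f ` {\<alpha>0..}. norm y \<le> Bf" using assms(1) unfolding inM_def bounded_iff by auto
  obtain Bg where Bg: "\<forall>y\<in>g ` {\<alpha>0..}. norm y \<le> Bg" using assms(2) unfolding inM_def bounded_iff by auto
  show "bdd_above ((\<lambda>x. \<bar>f x - g x\<bar>) ` {\<alpha>0..})"
  proof (rule bdd_aboveI2)
    fix y assume y: "y \<in> {\<alpha>0..}"
    have "\<bar>f y\<bar> \<le> Bf" "\<bar>g y\<bar> \<le> Bg" using Bf Bg y by auto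
    thus "\<bar>f y - g y\<bar> \<le> Bf + Bg" by linarith
  qed
qed

lemma U_facts:
  fixes a Aal \<mu> \<nu> L1m N1m N1M L1b N1b D :: real and LL NN :: "real \<Rightarrow> (real \<Rightarrow> real) \<Rightarrow> real \<Rightarrow> real"
  assumes c: "a > 0" "Aal > 0" "\<mu> > 1" "\<nu> > 0" "\<nu> < \<mu>" "L1m > 0" "N1m > 0" "N1M > 0" "D \<ge> 0" "L1b \<ge> 0" "N1b \<ge> 0"
    and cont: "\<forall>f. inC Aal f \<longrightarrow> continuous_on {0<..Aal} (LL Aal f) \<and> continuous_on {0<..Aal} (NN Aal f)"
    and H1: "\<forall>f. inC Aal f \<longrightarrow> (\<forall>\<eta>\<in>{0<..Aal}.
        L1m * \<eta> powr (-\<mu>) \<le> LL Aal f \<eta> \<and> LL Aal f \<eta> \<le> L1M * \<eta> powr (-\<mu>) \<and>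
        N1m * \<eta> powr (-\<nu>) \<le> NN Aal f \<eta> \<and> NN Aal f \<eta> \<le> N1M * \<eta> powr (-\<nu>))"
    and H2: "\<forall>f g. inC Aal f \<longrightarrow> inC Aal g \<longrightarrow> (\<forall>s\<in>{0<..Aal}.
        \<bar>LL Aal f s - LL Aal g s\<bar> \<le> L1b * supn {0..Aal} (\<lambda>x. f x - g x) \<and>
        \<bar>NN Aal f s - NN Aal g s\<bar> \<le> N1b * supn {0..Aal} (\<lambda>x. f x - g x))"
  shows U_into: "inC Aal f \<Longrightarrow> inC Aal (Uop D a Aal LL NN f)"
    and U_lip: "inC Aal f \<Longrightarrow> inC Aal g \<Longrightarrow> \<eta> \<in> {0..Aal} \<Longrightarrow>
      \<bar>Uop D a Aal LL NN f \<eta> - Uop D a Aal LL NN g \<eta>\<bar> \<le> phi D a \<mu> \<nu> L1m N1M L1b N1b Aal * supn {0..Aal} (\<lambda>x. f x - g x)"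
proof -
  have UF: "Ufun a Aal \<mu> \<nu> L1m N1M (LL Aal f) (NN Aal f)" if f: "inC Aal f" for f
  proof
    fix s assume s: "s \<in> {0<..Aal}"
    show "L1m * s powr (-\<mu>) \<le> LL Aal f s" using H1 f s by blast
    have "0 \<le> N1m * s powr (-\<nu>)" using c by simp
    thus "0 \<le> NN Aal f s \<and> NN Aal f s \<le> N1M * s powr (-\<nu>)" using H1 f s by (meson order_trans)
  qed (use c cont f in auto)
  {
    assume f: "inC Aal f"
    interpret U: Ufun a Aal \<mu> \<nu> L1m N1M "LL Aal f" "NN Aal f" by (rule UF[OF f])
    show "inC Aal (Uop D a Aal LL NN f)"
      unfolding inC_def Uop_def[abs_def] by (intro continuous_intros U.F1_cont)
  }
  assume f: "inC Aal f" and g: "inC Aal g" and e: "\<eta> \<in> {0..Aal}"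
  define d where "d = supn {0..Aal} (\<lambda>x. f x - g x)"
  have d: "d \<ge> 0" unfolding d_def using supn_C[OF f g, of 0] c by (auto intro: order_trans[OF abs_ge_zero])
  interpret UP: Upair a Aal \<mu> \<nu> L1m N1M "LL Aal f" "NN Aal f" "LL Aal g" "NN Aal g" L1b N1b d
  proof -
    interpret U: Ufun a Aal \<mu> \<nu> L1m N1M "LL Aal f" "NN Aal f" by (rule UF[OF f])
    interpret V: Ufun a Aal \<mu> \<nu> L1m N1M "LL Aal g" "NN Aal g" by (rule UF[OF g])
    show "Upair a Aal \<mu> \<nu> L1m N1M (LL Aal f) (NN Aal f) (LL Aal g) (NN Aal g) L1b N1b d"
      by unfold_locales (use c d H2 f g in \<open>auto simp: d_def\<close>)
  qed
  let ?F = "\<lambda>t. F1 a Aal (LL Aal f) (NN Aal f) t"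
  let ?G = "\<lambda>t. F1 a Aal (LL Aal g) (NN Aal g) t"
  have "\<bar>Uop D a Aal LL NN f \<eta> - Uop D a Aal LL NN g \<eta>\<bar> = D * \<bar>(?F Aal - ?G Aal) - (?F \<eta> - ?G \<eta>)\<bar>"
  proof -
    have "Uop D a Aal LL NN f \<eta> - Uop D a Aal LL NN g \<eta> = D * ((?F Aal - ?G Aal) - (?F \<eta> - ?G \<eta>))"
      unfolding Uop_def by (simp add: algebra_simps)
    thus ?thesis using c by (simp add: abs_mult)
  qed
  also have "\<dots> \<le> D * (\<bar>?F Aal - ?G Aal\<bar> + \<bar>?F \<eta> - ?G \<eta>\<bar>)"
    using c by (intro mult_left_mono abs_triangle_ineq4) auto
  also have "\<dots> \<le> D * (Fbar1 a \<mu> \<nu> L1m N1M L1b N1b Aal * d + Fbar1 a \<mu> \<nu> L1m N1M L1b N1b Aal * d)"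
    using c e UP.F_diff[of Aal] UP.F_diff[OF e] by (intro mult_left_mono add_mono) auto
  also have "\<dots> = phi D a \<mu> \<nu> L1m N1M L1b N1b Aal * d" unfolding phi_def by simp
  finally show "\<bar>Uop D a Aal LL NN f \<eta> - Uop D a Aal LL NN g \<eta>\<bar> \<le> phi D a \<mu> \<nu> L1m N1M L1b N1b Aal * supn {0..Aal} (\<lambda>x. f x - g x)"
    unfolding d_def .
qed

lemma W_facts:
  fixes a Aal \<beta> \<sigma> L2m L2M N2m N2M L2b N2b :: real and LL NN :: "real \<Rightarrow> (real \<Rightarrow> real) \<Rightarrow> real \<Rightarrow> real"
  assumes c: "a > 0" "Aal > 0" "\<sigma> > 0" "\<beta> > \<sigma> + 2" "L2m > 0" "L2M > 0" "N2m > 0" "N2M > 0" "L2b \<ge> 0" "N2b \<ge> 0"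
    and cont: "\<forall>f. inM Aal f \<longrightarrow> continuous_on {Aal..} (LL Aal f) \<and> continuous_on {Aal..} (NN Aal f)"
    and H1: "\<forall>f. inM Aal f \<longrightarrow> (\<forall>\<xi>\<in>{Aal..}.
        L2m * \<xi> powr \<beta> \<le> LL Aal f \<xi> \<and> LL Aal f \<xi> \<le> L2M * \<xi> powr \<beta> \<and>
        N2m * \<xi> powr \<sigma> \<le> NN Aal f \<xi> \<and> NN Aal f \<xi> \<le> N2M * \<xi> powr \<sigma>)"
    and H2: "\<forall>f g. inM Aal f \<longrightarrow> inM Aal g \<longrightarrow> (\<forall>s\<in>{Aal..}.
        \<bar>LL Aal f s - LL Aal g s\<bar> \<le> L2b * supn {Aal..} (\<lambda>x. f x - g x) \<and>
        \<bar>NN Aal f s - NN Aal g s\<bar> \<le> N2b * supn {Aal..} (\<lambda>x. f x - g x))"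
  shows W_into: "inM Aal f \<Longrightarrow> inM Aal (Wop a Aal LL NN f)"
    and W_lip: "inM Aal f \<Longrightarrow> inM Aal g \<Longrightarrow> \<xi> \<in> {Aal..} \<Longrightarrow>
      \<bar>Wop a Aal LL NN f \<xi> - Wop a Aal LL NN g \<xi>\<bar> \<le> phihat a \<beta> \<sigma> L2m L2M N2M L2b N2b Aal * supn {Aal..} (\<lambda>x. f x - g x)"
proof -
  have WF: "Wfun a Aal \<beta> \<sigma> L2m L2M N2M (LL Aal f) (NN Aal f)" if f: "inM Aal f" for f
  proof
    fix s assume s: "s \<ge> Aal"
    show "L2m * s powr \<beta> \<le> LL Aal f s \<and> LL Aal f s \<le> L2M * s powr \<beta>" using H1 f s by auto
    have "0 \<le> N2m * s powr \<sigma>" using c by simp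
    thus "0 \<le> NN Aal f s \<and> NN Aal f s \<le> N2M * s powr \<sigma>" using H1 f s by (meson atLeast_iff order_trans)
  qed (use c cont f in auto)
  have Weq: "Wop a Aal LL NN f = (\<lambda>\<xi>. - F2 a Aal (LL Aal f) (NN Aal f) \<xi> / F2inf a Aal (LL Aal f) (NN Aal f))" for f
    by (rule ext) (simp add: Wop_def)
  {
    assume f: "inM Aal f"
    interpret U: Wfun a Aal \<beta> \<sigma> L2m L2M N2M "LL Aal f" "NN Aal f" by (rule WF[OF f])
    show "inM Aal (Wop a Aal LL NN f)" unfolding Weq by (rule U.W_inM)
  }
  assume f: "inM Aal f" and g: "inM Aal g" and e: "\<xi> \<in> {Aal..}"
  define d where "d = supn {Aal..} (\<lambda>x. f x - g x)"
  have d: "d \<ge> 0" unfolding d_def using supn_M[OF f g, of Aal] c by (auto intro: order_trans[OF abs_ge_zero])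
  interpret WP: Wpair a Aal \<beta> \<sigma> L2m L2M N2M "LL Aal f" "NN Aal f" "LL Aal g" "NN Aal g" L2b N2b d
  proof -
    interpret U: Wfun a Aal \<beta> \<sigma> L2m L2M N2M "LL Aal f" "NN Aal f" by (rule WF[OF f])
    interpret V: Wfun a Aal \<beta> \<sigma> L2m L2M N2M "LL Aal g" "NN Aal g" by (rule WF[OF g])
    show "Wpair a Aal \<beta> \<sigma> L2m L2M N2M (LL Aal f) (NN Aal f) (LL Aal g) (NN Aal g) L2b N2b d"
      by unfold_locales (use c d H2 f g in \<open>auto simp: d_def\<close>)
  qed
  have "\<bar>Wop a Aal LL NN f \<xi> - Wop a Aal LL NN g \<xi>\<bar> \<le> 2 * WP.CC / WP.U.LB"
    unfolding Weq using WP.W_diff0 e by auto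
  also have "\<dots> = phihat a \<beta> \<sigma> L2m L2M N2M L2b N2b Aal * d" by (rule WP.phihat_eq)
  finally show "\<bar>Wop a Aal LL NN f \<xi> - Wop a Aal LL NN g \<xi>\<bar> \<le> phihat a \<beta> \<sigma> L2m L2M N2M L2b N2b Aal * supn {Aal..} (\<lambda>x. f x - g x)"
    unfolding d_def .
qed

lemma cancel_aux: "(c::real) > 0 \<Longrightarrow> x \<le> (1 - c) * x \<Longrightarrow> x \<le> 0"
  by (simp add: algebra_simps mult_le_0_iff)

theorem theorem1:
  fixes a Q0 lam0 \<theta>m :: real
    and \<mu> \<nu> \<beta> \<sigma> L1m L1M N1m N1M L2m L2M N2m N2M L1b N1b L2b N2b :: real
    and L1 N1 L2 N2 :: "real \<Rightarrow> (real \<Rightarrow> real) \<Rightarrow> real \<Rightarrow> real"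
  assumes pos: "a > 0" "Q0 > 0" "lam0 > 0" "\<theta>m > 0"
    and H1_consts: "\<mu> > 0" "\<nu> > 0" "\<beta> > 0" "\<sigma> > 0"
      "L1m > 0" "L1M > 0" "N1m > 0" "N1M > 0" "L2m > 0" "L2M > 0" "N2m > 0" "N2M > 0"
      "\<mu> > max 1 \<nu>" "\<beta> > \<sigma> + 2"
    and cont1: "\<forall>\<alpha>0>0. \<forall>f. inC \<alpha>0 f \<longrightarrow>
        continuous_on {0<..\<alpha>0} (L1 \<alpha>0 f) \<and> continuous_on {0<..\<alpha>0} (N1 \<alpha>0 f)"
    and cont2: "\<forall>\<alpha>0>0. \<forall>f. inM \<alpha>0 f \<longrightarrow>
        continuous_on {\<alpha>0..} (L2 \<alpha>0 f) \<and> continuous_on {\<alpha>0..} (N2 \<alpha>0 f)"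
    and H1_1: "\<forall>\<alpha>0>0. \<forall>f. inC \<alpha>0 f \<longrightarrow> (\<forall>\<eta>\<in>{0<..\<alpha>0}.
        L1m * \<eta> powr (-\<mu>) \<le> L1 \<alpha>0 f \<eta> \<and> L1 \<alpha>0 f \<eta> \<le> L1M * \<eta> powr (-\<mu>) \<and>
        N1m * \<eta> powr (-\<nu>) \<le> N1 \<alpha>0 f \<eta> \<and> N1 \<alpha>0 f \<eta> \<le> N1M * \<eta> powr (-\<nu>))"
    and H1_2: "\<forall>\<alpha>0>0. \<forall>f. inM \<alpha>0 f \<longrightarrow> (\<forall>\<xi>\<in>{\<alpha>0..}.
        L2m * \<xi> powr \<beta> \<le> L2 \<alpha>0 f \<xi> \<and> L2 \<alpha>0 f \<xi> \<le> L2M * \<xi> powr \<beta> \<and>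
        N2m * \<xi> powr \<sigma> \<le> N2 \<alpha>0 f \<xi> \<and> N2 \<alpha>0 f \<xi> \<le> N2M * \<xi> powr \<sigma>)"
    and H2_consts: "L1b \<ge> 0" "N1b \<ge> 0" "L2b \<ge> 0" "N2b \<ge> 0"
    and nondeg: "L1b + N1b > 0" "L2b + N2b > 0"
    and H2_1: "\<forall>\<alpha>0>0. \<forall>f g. inC \<alpha>0 f \<longrightarrow> inC \<alpha>0 g \<longrightarrow> (\<forall>s\<in>{0<..\<alpha>0}.
        \<bar>L1 \<alpha>0 f s - L1 \<alpha>0 g s\<bar> \<le> L1b * supn {0..\<alpha>0} (\<lambda>x. f x - g x) \<and>
        \<bar>N1 \<alpha>0 f s - N1 \<alpha>0 g s\<bar> \<le> N1b * supn {0..\<alpha>0} (\<lambda>x. f x - g x))"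
    and H2_2: "\<forall>\<alpha>0>0. \<forall>f g. inM \<alpha>0 f \<longrightarrow> inM \<alpha>0 g \<longrightarrow> (\<forall>s\<in>{\<alpha>0..}.
        \<bar>L2 \<alpha>0 f s - L2 \<alpha>0 g s\<bar> \<le> L2b * supn {\<alpha>0..} (\<lambda>x. f x - g x) \<and>
        \<bar>N2 \<alpha>0 f s - N2 \<alpha>0 g s\<bar> \<le> N2b * supn {\<alpha>0..} (\<lambda>x. f x - g x))"
  defines "\<phi> \<equiv> phi (Dstar Q0 lam0 \<theta>m) a \<mu> \<nu> L1m N1M L1b N1b"
    and "\<phi>h \<equiv> phihat a \<beta> \<sigma> L2m L2M N2M L2b N2b"
  shows
    "(\<forall>z>0. \<phi>h z > 0) \<and>
     (\<forall>x>0. \<forall>y>x. \<phi>h y < \<phi>h x) \<and>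
     filterlim \<phi>h at_top (at_right 0) \<and> (\<phi>h \<longlongrightarrow> 0) at_top \<and>
     (\<forall>z>0. \<phi> z > 0) \<and>
     (\<forall>x>0. \<forall>y>x. \<phi> x < \<phi> y) \<and>
     (\<phi> \<longlongrightarrow> 0) (at_right 0) \<and> filterlim \<phi> at_top at_top \<and>
     (\<forall>\<alpha>01 \<alpha>02. \<alpha>01 > 0 \<and> \<phi>h \<alpha>01 = 1 \<and> \<alpha>02 > 0 \<and> \<phi> \<alpha>02 = 1 \<and>
        Q0 < 2 * pi * lam0 * \<theta>m / Fbar1 a \<mu> \<nu> L1m N1M L1b N1b \<alpha>01 \<longrightarrow>
        \<alpha>01 < \<alpha>02 \<and>
        (\<forall>\<alpha>0\<in>{\<alpha>01<..<\<alpha>02}.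
           \<comment> \<open>Psi maps K = C[0,alpha0] x M into itself\<close>
           (\<forall>f1 f2. inC \<alpha>0 f1 \<and> inM \<alpha>0 f2 \<longrightarrow>
              inC \<alpha>0 (Uop (Dstar Q0 lam0 \<theta>m) a \<alpha>0 L1 N1 f1) \<and> inM \<alpha>0 (Wop a \<alpha>0 L2 N2 f2)) \<and>
           \<comment> \<open>Psi is a contraction for the max-norm\<close>
           (\<exists>k. 0 \<le> k \<and> k < 1 \<and>
              (\<forall>f1 f2 g1 g2. inC \<alpha>0 f1 \<and> inM \<alpha>0 f2 \<and> inC \<alpha>0 g1 \<and> inM \<alpha>0 g2 \<longrightarrow>
                 max (supn {0..\<alpha>0} (\<lambda>x. Uop (Dstar Q0 lam0 \<theta>m) a \<alpha>0 L1 N1 f1 x - Uop (Dstar Q0 lam0 \<theta>m) a \<alpha>0 L1 N1 g1 x))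
                     (supn {\<alpha>0..} (\<lambda>x. Wop a \<alpha>0 L2 N2 f2 x - Wop a \<alpha>0 L2 N2 g2 x))
                 \<le> k * max (supn {0..\<alpha>0} (\<lambda>x. f1 x - g1 x)) (supn {\<alpha>0..} (\<lambda>x. f2 x - g2 x)))) \<and>
           \<comment> \<open>unique fixed point in K (functions identified on their domains)\<close>
           (\<exists>f1 f2. inC \<alpha>0 f1 \<and> inM \<alpha>0 f2 \<and>
              (\<forall>\<eta>\<in>{0..\<alpha>0}. f1 \<eta> = Uop (Dstar Q0 lam0 \<theta>m) a \<alpha>0 L1 N1 f1 \<eta>) \<and>
              (\<forall>\<xi>\<in>{\<alpha>0..}. f2 \<xi> = Wop a \<alpha>0 L2 N2 f2 \<xi>) \<and>
              (\<forall>g1 g2. inC \<alpha>0 g1 \<and> inM \<alpha>0 g2 \<and>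
                 (\<forall>\<eta>\<in>{0..\<alpha>0}. g1 \<eta> = Uop (Dstar Q0 lam0 \<theta>m) a \<alpha>0 L1 N1 g1 \<eta>) \<and>
                 (\<forall>\<xi>\<in>{\<alpha>0..}. g2 \<xi> = Wop a \<alpha>0 L2 N2 g2 \<xi>) \<longrightarrow>
                 (\<forall>\<eta>\<in>{0..\<alpha>0}. g1 \<eta> = f1 \<eta>) \<and> (\<forall>\<xi>\<in>{\<alpha>0..}. g2 \<xi> = f2 \<xi>)))))"
proof -
  note phidef = \<open>\<phi> \<equiv> phi (Dstar Q0 lam0 \<theta>m) a \<mu> \<nu> L1m N1M L1b N1b\<close>
  note phihdef = \<open>\<phi>h \<equiv> phihat a \<beta> \<sigma> L2m L2M N2M L2b N2b\<close>
  have mu: "\<mu> > 1" "\<nu> < \<mu>" using H1_consts(13) by auto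
  have D: "Dstar Q0 lam0 \<theta>m > 0" unfolding Dstar_def using pos by simp
  have PH: "(\<forall>z>0. \<phi>h z > 0) \<and> (\<forall>x>0. \<forall>y>x. \<phi>h y < \<phi>h x) \<and> filterlim \<phi>h at_top (at_right 0) \<and> (\<phi>h \<longlongrightarrow> 0) at_top"
    unfolding phihdef by (rule phihat_props) (use pos H1_consts H2_consts nondeg in auto)
  have PP: "(\<forall>z>0. \<phi> z > 0) \<and> (\<forall>x>0. \<forall>y>x. \<phi> x < \<phi> y) \<and> (\<phi> \<longlongrightarrow> 0) (at_right 0) \<and> filterlim \<phi> at_top at_top"
    unfolding phidef by (rule phi_props) (use pos H1_consts H2_consts nondeg D mu in auto)
  have phpos: "\<And>z. z > 0 \<Longrightarrow> \<phi>h z > 0" and phmono: "\<And>x y. 0 < x \<Longrightarrow> x < y \<Longrightarrow> \<phi>h y < \<phi>h x"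
    and ppos: "\<And>z. z > 0 \<Longrightarrow> \<phi> z > 0" and pmono: "\<And>x y. 0 < x \<Longrightarrow> x < y \<Longrightarrow> \<phi> x < \<phi> y"
    using PH PP by blast+
  have main: "\<forall>\<alpha>01 \<alpha>02. \<alpha>01 > 0 \<and> \<phi>h \<alpha>01 = 1 \<and> \<alpha>02 > 0 \<and> \<phi> \<alpha>02 = 1 \<and>
        Q0 < 2 * pi * lam0 * \<theta>m / Fbar1 a \<mu> \<nu> L1m N1M L1b N1b \<alpha>01 \<longrightarrow>
        \<alpha>01 < \<alpha>02 \<and>
        (\<forall>\<alpha>0\<in>{\<alpha>01<..<\<alpha>02}.
           (\<forall>f1 f2. inC \<alpha>0 f1 \<and> inM \<alpha>0 f2 \<longrightarrow>
              inC \<alpha>0 (Uop (Dstar Q0 lam0 \<theta>m) a \<alpha>0 L1 N1 f1) \<and> inM \<alpha>0 (Wop a \<alpha>0 L2 N2 f2)) \<and>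
           (\<exists>k. 0 \<le> k \<and> k < 1 \<and>
              (\<forall>f1 f2 g1 g2. inC \<alpha>0 f1 \<and> inM \<alpha>0 f2 \<and> inC \<alpha>0 g1 \<and> inM \<alpha>0 g2 \<longrightarrow>
                 max (supn {0..\<alpha>0} (\<lambda>x. Uop (Dstar Q0 lam0 \<theta>m) a \<alpha>0 L1 N1 f1 x - Uop (Dstar Q0 lam0 \<theta>m) a \<alpha>0 L1 N1 g1 x))
                     (supn {\<alpha>0..} (\<lambda>x. Wop a \<alpha>0 L2 N2 f2 x - Wop a \<alpha>0 L2 N2 g2 x))
                 \<le> k * max (supn {0..\<alpha>0} (\<lambda>x. f1 x - g1 x)) (supn {\<alpha>0..} (\<lambda>x. f2 x - g2 x)))) \<and>
           (\<exists>f1 f2. inC \<alpha>0 f1 \<and> inM \<alpha>0 f2 \<and>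
              (\<forall>\<eta>\<in>{0..\<alpha>0}. f1 \<eta> = Uop (Dstar Q0 lam0 \<theta>m) a \<alpha>0 L1 N1 f1 \<eta>) \<and>
              (\<forall>\<xi>\<in>{\<alpha>0..}. f2 \<xi> = Wop a \<alpha>0 L2 N2 f2 \<xi>) \<and>
              (\<forall>g1 g2. inC \<alpha>0 g1 \<and> inM \<alpha>0 g2 \<and>
                 (\<forall>\<eta>\<in>{0..\<alpha>0}. g1 \<eta> = Uop (Dstar Q0 lam0 \<theta>m) a \<alpha>0 L1 N1 g1 \<eta>) \<and>
                 (\<forall>\<xi>\<in>{\<alpha>0..}. g2 \<xi> = Wop a \<alpha>0 L2 N2 g2 \<xi>) \<longrightarrow>
                 (\<forall>\<eta>\<in>{0..\<alpha>0}. g1 \<eta> = f1 \<eta>) \<and> (\<forall>\<xi>\<in>{\<alpha>0..}. g2 \<xi> = f2 \<xi>))))"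
  proof (intro allI impI, elim conjE)
    fix \<alpha>01 \<alpha>02
    assume a1: "\<alpha>01 > 0" "\<phi>h \<alpha>01 = 1" and a2: "\<alpha>02 > 0" "\<phi> \<alpha>02 = 1"
      and Q: "Q0 < 2 * pi * lam0 * \<theta>m / Fbar1 a \<mu> \<nu> L1m N1M L1b N1b \<alpha>01"
    have Fp: "Fbar1 a \<mu> \<nu> L1m N1M L1b N1b \<alpha>01 > 0"
      using ppos[OF a1(1)] D unfolding phidef phi_def by (simp add: zero_less_mult_iff)
    have QF: "Q0 * Fbar1 a \<mu> \<nu> L1m N1M L1b N1b \<alpha>01 < 2 * pi * lam0 * \<theta>m"
      using Q Fp by (simp add: less_divide_eq)
    have p1: "\<phi> \<alpha>01 < 1"
      unfolding phidef phi_def Dstar_def using QF pos by (simp add: field_simps)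
    have lt: "\<alpha>01 < \<alpha>02"
    proof (rule ccontr)
      assume "\<not> \<alpha>01 < \<alpha>02"
      hence "\<alpha>02 = \<alpha>01 \<or> \<alpha>02 < \<alpha>01" by auto
      thus False using pmono[OF a2(1), of \<alpha>01] p1 a2(2) by auto
    qed
    show "\<alpha>01 < \<alpha>02 \<and>
        (\<forall>\<alpha>0\<in>{\<alpha>01<..<\<alpha>02}.
           (\<forall>f1 f2. inC \<alpha>0 f1 \<and> inM \<alpha>0 f2 \<longrightarrow>
              inC \<alpha>0 (Uop (Dstar Q0 lam0 \<theta>m) a \<alpha>0 L1 N1 f1) \<and> inM \<alpha>0 (Wop a \<alpha>0 L2 N2 f2)) \<and>
           (\<exists>k. 0 \<le> k \<and> k < 1 \<and>
              (\<forall>f1 f2 g1 g2. inC \<alpha>0 f1 \<and> inM \<alpha>0 f2 \<and> inC \<alpha>0 g1 \<and> inM \<alpha>0 g2 \<longrightarrow>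
                 max (supn {0..\<alpha>0} (\<lambda>x. Uop (Dstar Q0 lam0 \<theta>m) a \<alpha>0 L1 N1 f1 x - Uop (Dstar Q0 lam0 \<theta>m) a \<alpha>0 L1 N1 g1 x))
                     (supn {\<alpha>0..} (\<lambda>x. Wop a \<alpha>0 L2 N2 f2 x - Wop a \<alpha>0 L2 N2 g2 x))
                 \<le> k * max (supn {0..\<alpha>0} (\<lambda>x. f1 x - g1 x)) (supn {\<alpha>0..} (\<lambda>x. f2 x - g2 x)))) \<and>
           (\<exists>f1 f2. inC \<alpha>0 f1 \<and> inM \<alpha>0 f2 \<and>
              (\<forall>\<eta>\<in>{0..\<alpha>0}. f1 \<eta> = Uop (Dstar Q0 lam0 \<theta>m) a \<alpha>0 L1 N1 f1 \<eta>) \<and>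
              (\<forall>\<xi>\<in>{\<alpha>0..}. f2 \<xi> = Wop a \<alpha>0 L2 N2 f2 \<xi>) \<and>
              (\<forall>g1 g2. inC \<alpha>0 g1 \<and> inM \<alpha>0 g2 \<and>
                 (\<forall>\<eta>\<in>{0..\<alpha>0}. g1 \<eta> = Uop (Dstar Q0 lam0 \<theta>m) a \<alpha>0 L1 N1 g1 \<eta>) \<and>
                 (\<forall>\<xi>\<in>{\<alpha>0..}. g2 \<xi> = Wop a \<alpha>0 L2 N2 g2 \<xi>) \<longrightarrow>
                 (\<forall>\<eta>\<in>{0..\<alpha>0}. g1 \<eta> = f1 \<eta>) \<and> (\<forall>\<xi>\<in>{\<alpha>0..}. g2 \<xi> = f2 \<xi>))))"
    proof (rule conjI[OF lt], intro ballI)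
      fix \<alpha>0 assume \<alpha>: "\<alpha>0 \<in> {\<alpha>01<..<\<alpha>02}"
      have al: "\<alpha>0 > 0" using \<alpha> a1 by auto
      have k1: "\<phi> \<alpha>0 < 1" "\<phi> \<alpha>0 > 0" using pmono[OF al, of \<alpha>02] \<alpha> a2 ppos[OF al] by auto
      have k2: "\<phi>h \<alpha>0 < 1" "\<phi>h \<alpha>0 > 0" using phmono[OF a1(1), of \<alpha>0] \<alpha> a1 phpos[OF al] by auto
      have c1: "\<forall>f. inC \<alpha>0 f \<longrightarrow> continuous_on {0<..\<alpha>0} (L1 \<alpha>0 f) \<and> continuous_on {0<..\<alpha>0} (N1 \<alpha>0 f)"
        using cont1 al by blast
      have c2: "\<forall>f. inM \<alpha>0 f \<longrightarrow> continuous_on {\<alpha>0..} (L2 \<alpha>0 f) \<and> continuous_on {\<alpha>0..} (N2 \<alpha>0 f)"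
        using cont2 al by blast
      have h11: "\<forall>f. inC \<alpha>0 f \<longrightarrow> (\<forall>\<eta>\<in>{0<..\<alpha>0}.
        L1m * \<eta> powr (-\<mu>) \<le> L1 \<alpha>0 f \<eta> \<and> L1 \<alpha>0 f \<eta> \<le> L1M * \<eta> powr (-\<mu>) \<and>
        N1m * \<eta> powr (-\<nu>) \<le> N1 \<alpha>0 f \<eta> \<and> N1 \<alpha>0 f \<eta> \<le> N1M * \<eta> powr (-\<nu>))" using H1_1 al by blast
      have h12: "\<forall>f. inM \<alpha>0 f \<longrightarrow> (\<forall>\<xi>\<in>{\<alpha>0..}.
        L2m * \<xi> powr \<beta> \<le> L2 \<alpha>0 f \<xi> \<and> L2 \<alpha>0 f \<xi> \<le> L2M * \<xi> powr \<beta> \<and>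
        N2m * \<xi> powr \<sigma> \<le> N2 \<alpha>0 f \<xi> \<and> N2 \<alpha>0 f \<xi> \<le> N2M * \<xi> powr \<sigma>)" using H1_2 al by blast
      have h21: "\<forall>f g. inC \<alpha>0 f \<longrightarrow> inC \<alpha>0 g \<longrightarrow> (\<forall>s\<in>{0<..\<alpha>0}.
        \<bar>L1 \<alpha>0 f s - L1 \<alpha>0 g s\<bar> \<le> L1b * supn {0..\<alpha>0} (\<lambda>x. f x - g x) \<and>
        \<bar>N1 \<alpha>0 f s - N1 \<alpha>0 g s\<bar> \<le> N1b * supn {0..\<alpha>0} (\<lambda>x. f x - g x))" using H2_1 al by blast
      have h22: "\<forall>f g. inM \<alpha>0 f \<longrightarrow> inM \<alpha>0 g \<longrightarrow> (\<forall>s\<in>{\<alpha>0..}.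
        \<bar>L2 \<alpha>0 f s - L2 \<alpha>0 g s\<bar> \<le> L2b * supn {\<alpha>0..} (\<lambda>x. f x - g x) \<and>
        \<bar>N2 \<alpha>0 f s - N2 \<alpha>0 g s\<bar> \<le> N2b * supn {\<alpha>0..} (\<lambda>x. f x - g x))" using H2_2 al by blast
      have cU: "a > 0" "\<alpha>0 > 0" "\<mu> > 1" "\<nu> > 0" "\<nu> < \<mu>" "L1m > 0" "N1m > 0" "N1M > 0" "Dstar Q0 lam0 \<theta>m \<ge> 0" "L1b \<ge> 0" "N1b \<ge> 0"
        using pos al mu H1_consts H2_consts D by auto
      have cW: "a > 0" "\<alpha>0 > 0" "\<sigma> > 0" "\<beta> > \<sigma> + 2" "L2m > 0" "L2M > 0" "N2m > 0" "N2M > 0" "L2b \<ge> 0" "N2b \<ge> 0"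
        using pos al H1_consts H2_consts by auto
      let ?U = "Uop (Dstar Q0 lam0 \<theta>m) a \<alpha>0 L1 N1"
      let ?W = "Wop a \<alpha>0 L2 N2"
      have Uin: "\<And>f. inC \<alpha>0 f \<Longrightarrow> inC \<alpha>0 (?U f)" by (rule U_into[where a=a and Aal=\<alpha>0 and \<mu>=\<mu> and \<nu>=\<nu> and L1m=L1m and N1m=N1m and N1M=N1M and D="Dstar Q0 lam0 \<theta>m" and L1b=L1b and N1b=N1b and LL=L1 and NN=N1 and L1M=L1M, OF cU c1 h11 h21])
      have Ul: "\<And>f g \<eta>. inC \<alpha>0 f \<Longrightarrow> inC \<alpha>0 g \<Longrightarrow> \<eta> \<in> {0..\<alpha>0} \<Longrightarrow>
          \<bar>?U f \<eta> - ?U g \<eta>\<bar> \<le> \<phi> \<alpha>0 * supn {0..\<alpha>0} (\<lambda>x. f x - g x)"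
        unfolding phidef by (rule U_lip[where a=a and Aal=\<alpha>0 and \<mu>=\<mu> and \<nu>=\<nu> and L1m=L1m and N1m=N1m and N1M=N1M and D="Dstar Q0 lam0 \<theta>m" and L1b=L1b and N1b=N1b and LL=L1 and NN=N1 and L1M=L1M, OF cU c1 h11 h21])
      have Win: "\<And>f. inM \<alpha>0 f \<Longrightarrow> inM \<alpha>0 (?W f)" by (rule W_into[where a=a and Aal=\<alpha>0 and \<beta>=\<beta> and \<sigma>=\<sigma> and L2m=L2m and L2M=L2M and N2m=N2m and N2M=N2M and L2b=L2b and N2b=N2b and LL=L2 and NN=N2, OF cW c2 h12 h22])
      have Wl: "\<And>f g \<xi>. inM \<alpha>0 f \<Longrightarrow> inM \<alpha>0 g \<Longrightarrow> \<xi> \<in> {\<alpha>0..} \<Longrightarrow>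
          \<bar>?W f \<xi> - ?W g \<xi>\<bar> \<le> \<phi>h \<alpha>0 * supn {\<alpha>0..} (\<lambda>x. f x - g x)"
        unfolding phihdef by (rule W_lip[where a=a and Aal=\<alpha>0 and \<beta>=\<beta> and \<sigma>=\<sigma> and L2m=L2m and L2M=L2M and N2m=N2m and N2M=N2M and L2b=L2b and N2b=N2b and LL=L2 and NN=N2, OF cW c2 h12 h22])
      have d1: "supn {0..\<alpha>0} (\<lambda>x. f x - g x) \<ge> 0" if "inC \<alpha>0 f" "inC \<alpha>0 g" for f g
        using supn_C[OF that, of 0] al by (auto intro: order_trans[OF abs_ge_zero])
      have d2: "supn {\<alpha>0..} (\<lambda>x. f x - g x) \<ge> 0" if "inM \<alpha>0 f" "inM \<alpha>0 g" for f g
        using supn_M[OF that, of \<alpha>0] by (auto intro: order_trans[OF abs_ge_zero])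
      have sU: "supn {0..\<alpha>0} (\<lambda>x. ?U f x - ?U g x) \<le> \<phi> \<alpha>0 * supn {0..\<alpha>0} (\<lambda>x. f x - g x)"
        if "inC \<alpha>0 f" "inC \<alpha>0 g" for f g
        unfolding supn_def[of "{0..\<alpha>0}" "\<lambda>x. ?U f x - ?U g x"]
        by (rule cSUP_least) (use al Ul[OF that] in auto)
      have sW: "supn {\<alpha>0..} (\<lambda>x. ?W f x - ?W g x) \<le> \<phi>h \<alpha>0 * supn {\<alpha>0..} (\<lambda>x. f x - g x)"
        if "inM \<alpha>0 f" "inM \<alpha>0 g" for f g
        unfolding supn_def[of "{\<alpha>0..}" "\<lambda>x. ?W f x - ?W g x"]
        by (rule cSUP_least) (use Wl[OF that] in auto)
      show "(\<forall>f1 f2. inC \<alpha>0 f1 \<and> inM \<alpha>0 f2 \<longrightarrow> inC \<alpha>0 (?U f1) \<and> inM \<alpha>0 (?W f2)) \<and>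
           (\<exists>k. 0 \<le> k \<and> k < 1 \<and>
              (\<forall>f1 f2 g1 g2. inC \<alpha>0 f1 \<and> inM \<alpha>0 f2 \<and> inC \<alpha>0 g1 \<and> inM \<alpha>0 g2 \<longrightarrow>
                 max (supn {0..\<alpha>0} (\<lambda>x. ?U f1 x - ?U g1 x)) (supn {\<alpha>0..} (\<lambda>x. ?W f2 x - ?W g2 x))
                 \<le> k * max (supn {0..\<alpha>0} (\<lambda>x. f1 x - g1 x)) (supn {\<alpha>0..} (\<lambda>x. f2 x - g2 x)))) \<and>
           (\<exists>f1 f2. inC \<alpha>0 f1 \<and> inM \<alpha>0 f2 \<and>
              (\<forall>\<eta>\<in>{0..\<alpha>0}. f1 \<eta> = ?U f1 \<eta>) \<and> (\<forall>\<xi>\<in>{\<alpha>0..}. f2 \<xi> = ?W f2 \<xi>) \<and>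
              (\<forall>g1 g2. inC \<alpha>0 g1 \<and> inM \<alpha>0 g2 \<and>
                 (\<forall>\<eta>\<in>{0..\<alpha>0}. g1 \<eta> = ?U g1 \<eta>) \<and> (\<forall>\<xi>\<in>{\<alpha>0..}. g2 \<xi> = ?W g2 \<xi>) \<longrightarrow>
                 (\<forall>\<eta>\<in>{0..\<alpha>0}. g1 \<eta> = f1 \<eta>) \<and> (\<forall>\<xi>\<in>{\<alpha>0..}. g2 \<xi> = f2 \<xi>)))"
      proof (intro conjI)
        show "\<forall>f1 f2. inC \<alpha>0 f1 \<and> inM \<alpha>0 f2 \<longrightarrow> inC \<alpha>0 (?U f1) \<and> inM \<alpha>0 (?W f2)" using Uin Win by blast
        show "\<exists>k. 0 \<le> k \<and> k < 1 \<and>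
              (\<forall>f1 f2 g1 g2. inC \<alpha>0 f1 \<and> inM \<alpha>0 f2 \<and> inC \<alpha>0 g1 \<and> inM \<alpha>0 g2 \<longrightarrow>
                 max (supn {0..\<alpha>0} (\<lambda>x. ?U f1 x - ?U g1 x)) (supn {\<alpha>0..} (\<lambda>x. ?W f2 x - ?W g2 x))
                 \<le> k * max (supn {0..\<alpha>0} (\<lambda>x. f1 x - g1 x)) (supn {\<alpha>0..} (\<lambda>x. f2 x - g2 x)))"
        proof (intro exI[of _ "max (\<phi> \<alpha>0) (\<phi>h \<alpha>0)"] conjI allI impI)
          show "0 \<le> max (\<phi> \<alpha>0) (\<phi>h \<alpha>0)" using k1 by auto
          show "max (\<phi> \<alpha>0) (\<phi>h \<alpha>0) < 1" using k1 k2 by auto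
          fix f1 f2 g1 g2 assume fs: "inC \<alpha>0 f1 \<and> inM \<alpha>0 f2 \<and> inC \<alpha>0 g1 \<and> inM \<alpha>0 g2"
          define e1 where "e1 = supn {0..\<alpha>0} (\<lambda>x. f1 x - g1 x)"
          define e2 where "e2 = supn {\<alpha>0..} (\<lambda>x. f2 x - g2 x)"
          have e: "e1 \<ge> 0" "e2 \<ge> 0" using d1 d2 fs unfolding e1_def e2_def by auto
          have "supn {0..\<alpha>0} (\<lambda>x. ?U f1 x - ?U g1 x) \<le> max (\<phi> \<alpha>0) (\<phi>h \<alpha>0) * max e1 e2"
          proof -
            have "\<phi> \<alpha>0 * e1 \<le> max (\<phi> \<alpha>0) (\<phi>h \<alpha>0) * max e1 e2" using e k1 k2 by (intro mult_mono) auto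
            thus ?thesis using sU[of f1 g1] fs unfolding e1_def[symmetric] by linarith
          qed
          moreover have "supn {\<alpha>0..} (\<lambda>x. ?W f2 x - ?W g2 x) \<le> max (\<phi> \<alpha>0) (\<phi>h \<alpha>0) * max e1 e2"
          proof -
            have "\<phi>h \<alpha>0 * e2 \<le> max (\<phi> \<alpha>0) (\<phi>h \<alpha>0) * max e1 e2" using e k1 k2 by (intro mult_mono) auto
            thus ?thesis using sW[of f2 g2] fs unfolding e2_def[symmetric] by linarith
          qed
          ultimately show "max (supn {0..\<alpha>0} (\<lambda>x. ?U f1 x - ?U g1 x)) (supn {\<alpha>0..} (\<lambda>x. ?W f2 x - ?W g2 x))
                 \<le> max (\<phi> \<alpha>0) (\<phi>h \<alpha>0) * max (supn {0..\<alpha>0} (\<lambda>x. f1 x - g1 x)) (supn {\<alpha>0..} (\<lambda>x. f2 x - g2 x))"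
            unfolding e1_def e2_def by simp
        qed
        have "\<exists>f. inC \<alpha>0 f \<and> (\<forall>\<eta>\<in>{0..\<alpha>0}. f \<eta> = ?U f \<eta>)"
          by (rule fix_C[where T="?U" and k="\<phi> \<alpha>0", OF al less_imp_le[OF k1(2)] k1(1) Uin Ul])
        then obtain f1 where f1: "inC \<alpha>0 f1" "\<forall>\<eta>\<in>{0..\<alpha>0}. f1 \<eta> = ?U f1 \<eta>" by blast
        have "\<exists>f. inM \<alpha>0 f \<and> (\<forall>\<xi>\<in>{\<alpha>0..}. f \<xi> = ?W f \<xi>)"
          by (rule fix_M[where T="?W" and k="\<phi>h \<alpha>0", OF al less_imp_le[OF k2(2)] k2(1) Win Wl])
        then obtain f2 where f2: "inM \<alpha>0 f2" "\<forall>\<xi>\<in>{\<alpha>0..}. f2 \<xi> = ?W f2 \<xi>" by blast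
        show "\<exists>f1 f2. inC \<alpha>0 f1 \<and> inM \<alpha>0 f2 \<and>
              (\<forall>\<eta>\<in>{0..\<alpha>0}. f1 \<eta> = ?U f1 \<eta>) \<and> (\<forall>\<xi>\<in>{\<alpha>0..}. f2 \<xi> = ?W f2 \<xi>) \<and>
              (\<forall>g1 g2. inC \<alpha>0 g1 \<and> inM \<alpha>0 g2 \<and>
                 (\<forall>\<eta>\<in>{0..\<alpha>0}. g1 \<eta> = ?U g1 \<eta>) \<and> (\<forall>\<xi>\<in>{\<alpha>0..}. g2 \<xi> = ?W g2 \<xi>) \<longrightarrow>
                 (\<forall>\<eta>\<in>{0..\<alpha>0}. g1 \<eta> = f1 \<eta>) \<and> (\<forall>\<xi>\<in>{\<alpha>0..}. g2 \<xi> = f2 \<xi>))"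
        proof -
          have uniq: "\<forall>g1 g2. inC \<alpha>0 g1 \<and> inM \<alpha>0 g2 \<and>
                 (\<forall>\<eta>\<in>{0..\<alpha>0}. g1 \<eta> = ?U g1 \<eta>) \<and> (\<forall>\<xi>\<in>{\<alpha>0..}. g2 \<xi> = ?W g2 \<xi>) \<longrightarrow>
                 (\<forall>\<eta>\<in>{0..\<alpha>0}. g1 \<eta> = f1 \<eta>) \<and> (\<forall>\<xi>\<in>{\<alpha>0..}. g2 \<xi> = f2 \<xi>)"
          proof (intro allI impI, elim conjE)
          fix g1 g2 assume g: "inC \<alpha>0 g1" "inM \<alpha>0 g2" "\<forall>\<eta>\<in>{0..\<alpha>0}. g1 \<eta> = ?U g1 \<eta>" "\<forall>\<xi>\<in>{\<alpha>0..}. g2 \<xi> = ?W g2 \<xi>"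
          define e1 where "e1 = supn {0..\<alpha>0} (\<lambda>x. g1 x - f1 x)"
          define e2 where "e2 = supn {\<alpha>0..} (\<lambda>x. g2 x - f2 x)"
          have "supn {0..\<alpha>0} (\<lambda>x. g1 x - f1 x) \<le> \<phi> \<alpha>0 * e1" unfolding supn_def[of "{0..\<alpha>0}" "\<lambda>x. g1 x - f1 x"]
          proof (rule cSUP_least)
            fix x assume x: "x \<in> {0..\<alpha>0}"
            have "\<bar>g1 x - f1 x\<bar> = \<bar>?U g1 x - ?U f1 x\<bar>" using g(3) f1(2) x by simp
            also have "\<dots> \<le> \<phi> \<alpha>0 * supn {0..\<alpha>0} (\<lambda>x. g1 x - f1 x)" by (rule Ul[OF g(1) f1(1) x])
            finally show "\<bar>g1 x - f1 x\<bar> \<le> \<phi> \<alpha>0 * e1" unfolding e1_def .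
          qed (use al in auto)
          hence "e1 \<le> \<phi> \<alpha>0 * e1" by (simp only: e1_def[symmetric])
          moreover have "e1 \<ge> 0" unfolding e1_def by (rule d1[OF g(1) f1(1)])
          ultimately have e10: "e1 \<le> 0" using k1 cancel_aux[of "1 - \<phi> \<alpha>0" e1] by (simp add: algebra_simps)
          have "supn {\<alpha>0..} (\<lambda>x. g2 x - f2 x) \<le> \<phi>h \<alpha>0 * e2" unfolding supn_def[of "{\<alpha>0..}" "\<lambda>x. g2 x - f2 x"]
          proof (rule cSUP_least)
            fix x assume x: "x \<in> {\<alpha>0..}"
            have "\<bar>g2 x - f2 x\<bar> = \<bar>?W g2 x - ?W f2 x\<bar>" using g(4) f2(2) x by simp
            also have "\<dots> \<le> \<phi>h \<alpha>0 * supn {\<alpha>0..} (\<lambda>x. g2 x - f2 x)" by (rule Wl[OF g(2) f2(1) x])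
            finally show "\<bar>g2 x - f2 x\<bar> \<le> \<phi>h \<alpha>0 * e2" unfolding e2_def .
          qed auto
          hence "e2 \<le> \<phi>h \<alpha>0 * e2" by (simp only: e2_def[symmetric])
          moreover have "e2 \<ge> 0" unfolding e2_def by (rule d2[OF g(2) f2(1)])
          ultimately have e20: "e2 \<le> 0" using k2 cancel_aux[of "1 - \<phi>h \<alpha>0" e2] by (simp add: algebra_simps)
          show "(\<forall>\<eta>\<in>{0..\<alpha>0}. g1 \<eta> = f1 \<eta>) \<and> (\<forall>\<xi>\<in>{\<alpha>0..}. g2 \<xi> = f2 \<xi>)"
          proof (intro conjI)
          show "\<forall>\<eta>\<in>{0..\<alpha>0}. g1 \<eta> = f1 \<eta>"
          proof
            fix x assume x: "x \<in> {0..\<alpha>0}"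
            have "\<bar>g1 x - f1 x\<bar> \<le> e1" unfolding e1_def by (rule supn_C[OF g(1) f1(1) x])
            thus "g1 x = f1 x" using e10 by linarith
          qed
          show "\<forall>\<xi>\<in>{\<alpha>0..}. g2 \<xi> = f2 \<xi>"
          proof
            fix x assume x: "x \<in> {\<alpha>0..}"
            have "\<bar>g2 x - f2 x\<bar> \<le> e2" unfolding e2_def by (rule supn_M[OF g(2) f2(1) x])
            thus "g2 x = f2 x" using e20 by linarith
          qed
          qed
          qed
          show ?thesis by (intro exI[of _ f1] exI[of _ f2] conjI f1 f2 uniq)
        qed
      qed
    qed
  qed
  from PH PP main show ?thesis by (elim conjE) (intro conjI; assumption)
qed

end
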